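(* Let $\delta\in(0,1)$, let $X\subset\mathbb{R}_+$ be a Borel set with $0\in X$, and let $x_0>0$. Let $\bar p$ be the stationary decision rule with $\bar p(y)=\frac{1-\delta}{2-\delta}$ for every best-so-far alternative $y$ (i.e. it stops with probability $\frac{1-\delta}{2-\delta}$ after every history). Then: (a) $R_{\bar p}(x_0,\mathcal F_X)\ge 1/4$; (b) if $\sup X=\infty$, then $\bar p$ is dynamically robust for $(x_0,\mathcal F_X)$.
   Context: Sequential search model. Fix a discount factor $\delta\in(0,1)$, a Borel set $X\subset\mathbb{R}_+$ with $0\in X$, and an outside option $x_0>0$. Let $\mathcal F_X$ be the set of all Borel probability distributions on $X$ with finite mean ("environments"); a set of feasible environments is any $\mathcal F\subset\mathcal F_X$. A history is $h_t=(x_0,x_1,\dots,x_t)$, $t\ge 0$, $x_i\in X$; its best-so-far alternative is $y_t=\max\{x_0,\dots,x_t\}$; $\mathcal H(x_0)$ is the set of all such histories. A decision rule $p$ assigns to each history $h$ a stopping probability $p(h)\in[0,1]$; it is stationary if $p(h)$ depends on $h$ only through its best-so-far alternative, written $p(y)$. Given an environment $F$ and a history $h_t$, the future alternatives are i.i.d. with law $F$; at each round $s\ge t$ the individual stops with probability $p(h_s)$ (otherwise observes the next alternative), and stopping at round $s$ yields $\delta^{s-t}y_s$ (never stopping yields $0$). $U_p(F,h_t)$ is the expected payoff, and $V(F,h)=\sup_pU_p(F,h)$. A prior is a finitely supported probability distribution $\mu$ on $\mathcal F$; $\Delta(\mathcal F)$ is the set of priors. An environment or prior is consistent with $h_t$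 if $x_1,\dots,x_t$ occurs with positive probability under it; $\mathcal F(h)$, $\Delta(\mathcal F(h))$ denote the consistent ones. For consistent $\mu$, $U_p(\mu,h)=\sum_F\mu(F\mid h)U_p(F,h)$ with $\mu(\cdot\mid h)$ the Bayesian posterior, and $V(\mu,h)=\sup_pU_p(\mu,h)$. The performance ratio is $R_p(x_0,\mathcal F)=\inf_{h\in\mathcal H(x_0)}\inf_{\mu\in\Delta(\mathcal F(h))}U_p(\mu,h)/V(\mu,h)$, $R^*(x_0,\mathcal F)=\sup_pR_p(x_0,\mathcal F)$ over all decision rules, and $p$ is dynamically robust if $R_p(x_0,\mathcal F)=R^*(x_0,\mathcal F)$. *)

theory Defs
  imports "HOL-Probability.Probability"
begin

text \<open>Histories are lists h = x0 # [x1,...,xt]; a decision rule is a function from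
  histories to stopping probabilities.\<close>

definition best_so_far :: "real list \<Rightarrow> real" where
  "best_so_far h = Max (set h)"

definition decision_rules :: "(real list \<Rightarrow> real) set" where
  "decision_rules = {p. \<forall>h. 0 \<le> p h \<and> p h \<le> 1}"

definition envs :: "real set \<Rightarrow> real measure set" where
  "envs X = {F. prob_space F \<and> sets F = sets borel \<and> emeasure F X = 1
                \<and> (\<integral>\<^sup>+ x. ennreal x \<partial>F) < \<infinity>}"

definition histories :: "real set \<Rightarrow> real \<Rightarrow> real list set" where
  "histories X x0 = {x0 # xs | xs. set xs \<subseteq> X}"

text \<open>Expected discounted payoff from stopping exactly n rounds after history h.\<close>
fun stop_term :: "real \<Rightarrow> (real list \<Rightarrow> real) \<Rightarrow> real measure \<Rightarrow> nat \<Rightarrow> real list \<Rightarrow> ennreal" where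
  "stop_term \<delta> p F 0 h = ennreal (p h) * ennreal (best_so_far h)"
| "stop_term \<delta> p F (Suc n) h =
     ennreal ((1 - p h) * \<delta>) * (\<integral>\<^sup>+ x. stop_term \<delta> p F n (h @ [x]) \<partial>F)"

definition U_env :: "real \<Rightarrow> (real list \<Rightarrow> real) \<Rightarrow> real measure \<Rightarrow> real list \<Rightarrow> ennreal" where
  "U_env \<delta> p F h = (\<Sum>n. stop_term \<delta> p F n h)"

definition likelihood :: "real measure \<Rightarrow> real list \<Rightarrow> real" where
  "likelihood F h = (\<Prod>x\<leftarrow>tl h. measure F {x})"

definition consistent_envs :: "real measure set \<Rightarrow> real list \<Rightarrow> real measure set" where
  "consistent_envs FS h = {F \<in> FS. likelihood F h > 0}"

definition priors :: "real measure set \<Rightarrow> real measure pmf set" where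
  "priors FS = {\<mu>. finite (set_pmf \<mu>) \<and> set_pmf \<mu> \<subseteq> FS}"

definition posterior :: "real measure pmf \<Rightarrow> real list \<Rightarrow> real measure \<Rightarrow> real" where
  "posterior \<mu> h F = pmf \<mu> F * likelihood F h /
      (\<Sum>G\<in>set_pmf \<mu>. pmf \<mu> G * likelihood G h)"

definition U_prior :: "real \<Rightarrow> (real list \<Rightarrow> real) \<Rightarrow> real measure pmf \<Rightarrow> real list \<Rightarrow> ennreal" where
  "U_prior \<delta> p \<mu> h = (\<Sum>F\<in>set_pmf \<mu>. ennreal (posterior \<mu> h F) * U_env \<delta> p F h)"

definition V_prior :: "real \<Rightarrow> real measure pmf \<Rightarrow> real list \<Rightarrow> ennreal" where
  "V_prior \<delta> \<mu> h = (SUP p\<in>decision_rules. U_prior \<delta> p \<mu> h)"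

definition perf_ratio :: "real \<Rightarrow> real set \<Rightarrow> real \<Rightarrow> real measure set \<Rightarrow> (real list \<Rightarrow> real) \<Rightarrow> ennreal" where
  "perf_ratio \<delta> X x0 FS p =
     (INF h\<in>histories X x0. INF \<mu>\<in>priors (consistent_envs FS h).
        U_prior \<delta> p \<mu> h / V_prior \<delta> \<mu> h)"

definition opt_ratio :: "real \<Rightarrow> real set \<Rightarrow> real \<Rightarrow> real measure set \<Rightarrow> ennreal" where
  "opt_ratio \<delta> X x0 FS = (SUP p\<in>decision_rules. perf_ratio \<delta> X x0 FS p)"

definition dyn_robust :: "real \<Rightarrow> real set \<Rightarrow> real \<Rightarrow> real measure set \<Rightarrow> (real list \<Rightarrow> real) \<Rightarrow> bool" where
  "dyn_robust \<delta> X x0 FS p \<longleftrightarrow> perf_ratio \<delta> X x0 FS p = opt_ratio \<delta> X x0 FS"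

end

theory Submission
  imports Defs
begin

lemma bsf_snoc: "h \<noteq> [] \<Longrightarrow> best_so_far (h @ [x]) = max (best_so_far h) x"
  unfolding best_so_far_def by (simp add: Max_insert max.commute)

lemma bsf_single: "best_so_far [y] = y"
  unfolding best_so_far_def by simp

lemma bsf_ge_hd: "x0 \<le> best_so_far (x0 # xs)"
  unfolding best_so_far_def by simp

lemma nn_integral_superadd:
  "integral\<^sup>N M f + integral\<^sup>N M g \<le> (\<integral>\<^sup>+x. f x + g x \<partial>M)"
proof -
  have *: "integral\<^sup>S M a + integral\<^sup>S M b \<le> (\<integral>\<^sup>+x. f x + g x \<partial>M)"
    if a: "simple_function M a" "a \<le> f" and b: "simple_function M b" "b \<le> g" for a b
  proof -
    have "integral\<^sup>S M a + integral\<^sup>S M b = (\<integral>\<^sup>Sx. a x + b x \<partial>M)"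
      using a b by (simp add: simple_integral_add)
    also have "\<dots> \<le> (\<integral>\<^sup>+x. f x + g x \<partial>M)"
      unfolding nn_integral_def
      by (rule SUP_upper) (use a b in \<open>auto simp: le_fun_def intro: add_mono\<close>)
    finally show ?thesis .
  qed
  define A where "A = {a. simple_function M a \<and> a \<le> f}"
  define B where "B = {b. simple_function M b \<and> b \<le> g}"
  have A: "A \<noteq> {}" unfolding A_def by (auto intro!: exI[of _ "\<lambda>_. 0"] simp: le_fun_def)
  have B: "B \<noteq> {}" unfolding B_def by (auto intro!: exI[of _ "\<lambda>_. 0"] simp: le_fun_def)
  have "(SUP a\<in>A. integral\<^sup>S M a) + (SUP b\<in>B. integral\<^sup>S M b) \<le> (\<integral>\<^sup>+x. f x + g x \<partial>M)"
    unfolding ennreal_SUP_add_left[OF A, symmetric]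
  proof (rule SUP_least)
    fix a assume "a \<in> A"
    show "integral\<^sup>S M a + (SUP b\<in>B. integral\<^sup>S M b) \<le> (\<integral>\<^sup>+x. f x + g x \<partial>M)"
      unfolding ennreal_SUP_add_right[OF B]
      by (rule SUP_least) (use \<open>a \<in> A\<close> * in \<open>auto simp: A_def B_def\<close>)
  qed
  then show ?thesis unfolding A_def B_def nn_integral_def[of M f] nn_integral_def[of M g] .
qed

lemma ennreal_max_real: "ennreal (max a b) = max (ennreal a) (ennreal b)"
  by (cases "a \<le> b") (auto simp: max_def ennreal_leI ennreal_le_iff2 intro: antisym ennreal_leI)

locale fenv = prob_space F for F :: "real measure" +
  fixes \<delta> :: real
  assumes sets_F: "sets F = sets borel"
    and mean_fin: "(\<integral>\<^sup>+x. ennreal x \<partial>F) < \<infinity>"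
    and d0: "0 < \<delta>" and d1: "\<delta> < 1"
begin

lemma measF: fixes f :: "real \<Rightarrow> 'b::topological_space"
  shows "f \<in> borel_measurable borel \<Longrightarrow> f \<in> borel_measurable F"
proof -
  have "measurable F borel = measurable borel (borel :: 'b measure)"
    by (rule measurable_cong_sets[OF sets_F refl])
  then show "f \<in> borel_measurable borel \<Longrightarrow> f \<in> borel_measurable F" by simp
qed

definition G :: "ennreal \<Rightarrow> ennreal" where
  "G u = (\<integral>\<^sup>+x. max u (ennreal x) \<partial>F)"

definition mF :: ennreal where "mF = (\<integral>\<^sup>+x. ennreal x \<partial>F)"

definition BB :: ennreal where "BB = ennreal (\<delta> / (1 - \<delta>)) * mF"

definition vs :: ennreal where "vs = Sup {v. v \<le> BB \<and> v \<le> ennreal \<delta> * G v}"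

lemma meas_max[measurable]: "(\<lambda>x. max u (ennreal x)) \<in> borel_measurable F"
  by (rule measF) measurable

lemma meas_enn[measurable]: "(\<lambda>x. ennreal x) \<in> borel_measurable F"
  by (rule measF) measurable

lemma G_mono: "u \<le> v \<Longrightarrow> G u \<le> G v"
  unfolding G_def by (rule nn_integral_mono) (auto simp: le_max_iff_disj)

lemma G_ge: "u \<le> G u"
proof -
  have "u = (\<integral>\<^sup>+x. u \<partial>F)" by (simp add: emeasure_space_1)
  also have "\<dots> \<le> G u" unfolding G_def by (rule nn_integral_mono) auto
  finally show ?thesis .
qed

lemma G_le: "G u \<le> u + mF"
proof -
  have "G u \<le> (\<integral>\<^sup>+x. u + ennreal x \<partial>F)"
    unfolding G_def by (rule nn_integral_mono) (auto simp: max_def add_increasing2 add_increasing)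
  also have "\<dots> = u + mF" unfolding mF_def
    by (subst nn_integral_add) (auto simp: emeasure_space_1)
  finally show ?thesis .
qed

lemma mF_fin: "mF < top" using mean_fin unfolding mF_def by simp

lemma BB_fin: "BB < top" unfolding BB_def using mF_fin by (simp add: ennreal_mult_less_top)

lemma BB_eq: "ennreal \<delta> * (BB + mF) = BB"
proof -
  have "ennreal \<delta> * (BB + mF) = ennreal \<delta> * (ennreal (\<delta> / (1 - \<delta>) + 1) * mF)"
    unfolding BB_def using d0 d1 by (simp add: ennreal_plus[symmetric] distrib_right)
  also have "\<dots> = ennreal (\<delta> * (\<delta> / (1 - \<delta>) + 1)) * mF"
    using d0 d1 by (simp add: ennreal_mult mult.assoc)
  also have "\<delta> * (\<delta> / (1 - \<delta>) + 1) = \<delta> / (1 - \<delta>)"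
    using d0 d1 by (simp add: field_simps)
  finally show ?thesis unfolding BB_def .
qed

lemma vs_props: "vs = ennreal \<delta> * G vs" "vs \<le> BB"
proof -
  define S where "S = {v. v \<le> BB \<and> v \<le> ennreal \<delta> * G v}"
  have vsS: "vs = Sup S" unfolding vs_def S_def ..
  have le1: "vs \<le> ennreal \<delta> * G vs"
    unfolding vsS
  proof (rule Sup_least)
    fix v assume "v \<in> S"
    then have "v \<le> ennreal \<delta> * G v" "v \<le> Sup S" by (auto simp: S_def intro: Sup_upper)
    then show "v \<le> ennreal \<delta> * G (Sup S)"
      by (meson G_mono mult_left_mono order_trans zero_le)
  qed
  have le2: "vs \<le> BB" unfolding vsS by (rule Sup_least) (auto simp: S_def)
  define w where "w = ennreal \<delta> * G vs"
  have "w \<le> ennreal \<delta> * (vs + mF)" unfolding w_def by (intro mult_left_mono G_le) auto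
  also have "\<dots> \<le> ennreal \<delta> * (BB + mF)" by (intro mult_left_mono add_right_mono le2) auto
  finally have wB: "w \<le> BB" using BB_eq by simp
  have "w \<le> ennreal \<delta> * G w" unfolding w_def
    by (intro mult_left_mono G_mono) (use le1 w_def in auto)
  with wB have "w \<in> S" by (simp add: S_def)
  then have "w \<le> vs" unfolding vsS by (rule Sup_upper)
  with le1 show "vs = ennreal \<delta> * G vs" unfolding w_def by (rule antisym)
  show "vs \<le> BB" by (rule le2)
qed

lemma vs_fin: "vs < top" using vs_props(2) BB_fin by (rule le_less_trans)

lemma G_fin: "u < top \<Longrightarrow> G u < top"
  using G_le[of u] mF_fin by (metis ennreal_add_less_top le_less_trans)

lemma UB_key: assumes "vs \<le> u" shows "ennreal \<delta> * G u \<le> u"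
proof (cases "u = top")
  case True then show ?thesis by simp
next
  case False
  have "G u \<le> (\<integral>\<^sup>+x. max vs (ennreal x) + (u - vs) \<partial>F)"
    unfolding G_def
  proof (rule nn_integral_mono)
    fix x
    have "u = vs + (u - vs)" using assms by (simp add: add_diff_inverse_ennreal)
    then show "max u (ennreal x) \<le> max vs (ennreal x) + (u - vs)"
      by (metis add_increasing2 add_right_mono max.cobounded1 max.cobounded2 max.boundedI zero_le)
  qed
  also have "\<dots> = G vs + (u - vs)" unfolding G_def
    by (subst nn_integral_add) (auto simp: emeasure_space_1)
  finally have "ennreal \<delta> * G u \<le> ennreal \<delta> * G vs + ennreal \<delta> * (u - vs)"
    by (metis distrib_left mult_left_mono zero_le)
  also have "\<dots> \<le> vs + (u - vs)"
  proof (intro add_mono)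
    show "ennreal \<delta> * G vs \<le> vs" using vs_props(1) by simp
    have "ennreal \<delta> * (u - vs) \<le> 1 * (u - vs)" by (rule mult_right_mono) (use d1 in auto)
    then show "ennreal \<delta> * (u - vs) \<le> u - vs" by simp
  qed
  also have "\<dots> = u" using assms by (simp add: add_diff_inverse_ennreal)
  finally show ?thesis .
qed

lemma LB_key: assumes "u \<le> vs" shows "u + G vs \<le> G u + vs"
proof -
  have "u + G vs = (\<integral>\<^sup>+x. u + max vs (ennreal x) \<partial>F)"
    unfolding G_def by (subst nn_integral_add) (auto simp: emeasure_space_1)
  also have "\<dots> \<le> (\<integral>\<^sup>+x. max u (ennreal x) + vs \<partial>F)"
  proof (rule nn_integral_mono)
    fix x show "u + max vs (ennreal x) \<le> max u (ennreal x) + vs"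
      using assms by (cases "ennreal x \<le> u"; cases "ennreal x \<le> vs")
        (auto simp: max_def add.commute intro: add_mono)
  qed
  also have "\<dots> = G u + vs" unfolding G_def
    by (subst nn_integral_add) (auto simp: emeasure_space_1)
  finally show ?thesis .
qed

end

lemma nn_integral_sum_le:
  "(\<Sum>i\<in>I. integral\<^sup>N M (f i)) \<le> (\<integral>\<^sup>+x. (\<Sum>i\<in>I. f i x) \<partial>M)"
proof (induction I rule: infinite_finite_induct)
  case (insert i I)
  have "(\<Sum>i\<in>insert i I. integral\<^sup>N M (f i)) = integral\<^sup>N M (f i) + (\<Sum>i\<in>I. integral\<^sup>N M (f i))"
    using insert by simp
  also have "\<dots> \<le> integral\<^sup>N M (f i) + (\<integral>\<^sup>+x. (\<Sum>i\<in>I. f i x) \<partial>M)"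
    using insert by (intro add_left_mono) auto
  also have "\<dots> \<le> (\<integral>\<^sup>+x. f i x + (\<Sum>i\<in>I. f i x) \<partial>M)"
    by (rule nn_integral_superadd)
  also have "\<dots> = (\<integral>\<^sup>+x. (\<Sum>i\<in>insert i I. f i x) \<partial>M)"
    using insert by simp
  finally show ?case .
qed auto

lemma bsf_pair[simp]: "best_so_far [y, x] = max y x"
  unfolding best_so_far_def by (simp add: max.commute)

lemma rule_bounds: "p \<in> decision_rules \<Longrightarrow> 0 \<le> p h \<and> p h \<le> 1"
  unfolding decision_rules_def by auto

context fenv
begin

definition W :: "real \<Rightarrow> ennreal" where "W y = max (ennreal y) vs"

lemma W_max: "W (max y x) = max (W y) (ennreal x)"
  unfolding W_def ennreal_max_real by (simp add: max.assoc max.commute max.left_commute)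

lemma int_W: "(\<integral>\<^sup>+x. W (max y x) \<partial>F) = G (W y)"
  unfolding W_max G_def ..

lemma W_ge: "ennreal y \<le> W y" "vs \<le> W y" unfolding W_def by auto

lemma W_fin: "W y < top" unfolding W_def using vs_fin by simp

lemma UB_partial:
  assumes p: "p \<in> decision_rules"
  shows "h \<noteq> [] \<Longrightarrow> (\<Sum>n<N. stop_term \<delta> p F n h) \<le> W (best_so_far h)"
proof (induction N arbitrary: h)
  case 0 then show ?case by simp
next
  case (Suc N)
  define y where "y = best_so_far h"
  have p01: "0 \<le> p h" "p h \<le> 1" using rule_bounds[OF p] by auto
  have "(\<Sum>n<Suc N. stop_term \<delta> p F n h) = stop_term \<delta> p F 0 h + (\<Sum>n<N. stop_term \<delta> p F (Suc n) h)"
    by (rule sum.lessThan_Suc_shift)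
  also have "\<dots> = ennreal (p h) * ennreal y + ennreal ((1 - p h) * \<delta>) * (\<Sum>n<N. \<integral>\<^sup>+x. stop_term \<delta> p F n (h @ [x]) \<partial>F)"
    by (simp add: y_def sum_distrib_left)
  also have "\<dots> \<le> ennreal (p h) * ennreal y + ennreal ((1 - p h) * \<delta>) * (\<integral>\<^sup>+x. (\<Sum>n<N. stop_term \<delta> p F n (h @ [x])) \<partial>F)"
    by (intro add_left_mono mult_left_mono nn_integral_sum_le) auto
  also have "\<dots> \<le> ennreal (p h) * ennreal y + ennreal ((1 - p h) * \<delta>) * (\<integral>\<^sup>+x. W (max y x) \<partial>F)"
    using Suc.IH[of "h @ [_]"] Suc.prems
    by (intro add_left_mono mult_left_mono nn_integral_mono) (auto simp: bsf_snoc y_def)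
  also have "\<dots> = ennreal (p h) * ennreal y + ennreal (1 - p h) * (ennreal \<delta> * G (W y))"
    unfolding int_W using p01 d0 by (simp add: ennreal_mult mult.assoc)
  also have "\<dots> \<le> ennreal (p h) * W y + ennreal (1 - p h) * W y"
    by (intro add_mono mult_left_mono UB_key W_ge) auto
  also have "\<dots> = W y" using p01
    by (simp add: distrib_right[symmetric] ennreal_plus[symmetric] del: ennreal_plus)
  finally show ?case unfolding y_def .
qed

lemma UB: "p \<in> decision_rules \<Longrightarrow> h \<noteq> [] \<Longrightarrow> U_env \<delta> p F h \<le> W (best_so_far h)"
  unfolding U_env_def
  using ennreal_suminf_bound_add[where y=0 and f="\<lambda>n. stop_term \<delta> p F n h"] UB_partial
  by simp

definition qq :: real where "qq = (1 - \<delta>) / (2 - \<delta>)"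
definition rr :: real where "rr = (1 - qq) * \<delta>"

lemma qq_props: "0 < qq" "qq < 1" "rr = \<delta> / (2 - \<delta>)" "0 < rr" "rr < 1"
  using d0 d1 unfolding rr_def qq_def by (auto simp: field_simps)

definition phi :: "nat \<Rightarrow> real \<Rightarrow> ennreal" where
  "phi n y = stop_term \<delta> (\<lambda>_. qq) F n [y]"

lemma phi_eq: "h \<noteq> [] \<Longrightarrow> stop_term \<delta> (\<lambda>_. qq) F n h = phi n (best_so_far h)"
proof (induction n arbitrary: h)
  case 0 then show ?case by (simp add: phi_def bsf_single)
next
  case (Suc n)
  have "stop_term \<delta> (\<lambda>_. qq) F (Suc n) h = ennreal ((1 - qq) * \<delta>) * (\<integral>\<^sup>+x. phi n (max (best_so_far h) x) \<partial>F)"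
    using Suc by (simp add: bsf_snoc)
  also have "\<dots> = phi (Suc n) (best_so_far h)"
  proof -
    have "stop_term \<delta> (\<lambda>_. qq) F n [best_so_far h, x] = phi n (max (best_so_far h) x)" for x
      using Suc.IH[of "[best_so_far h, x]"] by simp
    then show ?thesis by (simp add: phi_def[of "Suc n"] bsf_single)
  qed
  finally show ?case .
qed

lemma phi_0: "phi 0 y = ennreal qq * ennreal y"
  by (simp add: phi_def bsf_single)

lemma phi_Suc: "phi (Suc n) y = ennreal rr * (\<integral>\<^sup>+x. phi n (max y x) \<partial>F)"
  using phi_eq[of "[y] @ [_]" n] by (simp add: phi_def[of "Suc n"] bsf_snoc bsf_single rr_def)

lemma phi_meas[measurable]: "phi n \<in> borel_measurable borel"
proof (induction n)
  case 0 show ?case unfolding phi_0 by measurable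
next
  case (Suc n)
  note Suc[measurable]
  have "(\<lambda>(y, x). phi n (max y x)) \<in> borel_measurable (borel \<Otimes>\<^sub>M (borel :: real measure))"
    by measurable
  then have "(\<lambda>(y, x). phi n (max y x)) \<in> borel_measurable (borel \<Otimes>\<^sub>M F)"
  proof -
    have "sets ((borel :: real measure) \<Otimes>\<^sub>M F) = sets ((borel :: real measure) \<Otimes>\<^sub>M (borel :: real measure))"
      by (rule sets_pair_measure_cong[OF refl sets_F])
    then have "measurable ((borel :: real measure) \<Otimes>\<^sub>M F) (borel :: ennreal measure) = measurable ((borel :: real measure) \<Otimes>\<^sub>M (borel :: real measure)) borel"
      by (rule measurable_cong_sets) simp
    with \<open>(\<lambda>(y, x). phi n (max y x)) \<in> borel_measurable (borel \<Otimes>\<^sub>M (borel :: real measure))\<close>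
    show ?thesis by simp
  qed
  then have "(\<lambda>y. \<integral>\<^sup>+x. phi n (max y x) \<partial>F) \<in> borel_measurable borel"
    by (rule borel_measurable_nn_integral[where f="\<lambda>y x. phi n (max y x)", simplified])
  then show ?case unfolding phi_Suc by measurable
qed

lemma phi_max_meas[measurable]: "(\<lambda>x. phi n (max y x)) \<in> borel_measurable F"
  by (rule measF) measurable

definition Psi :: "real \<Rightarrow> ennreal" where "Psi y = (\<Sum>n. phi n y)"

lemma Psi_meas[measurable]: "Psi \<in> borel_measurable borel"
  unfolding Psi_def by measurable

lemma Psi_max_meas[measurable]: "(\<lambda>x. Psi (max y x)) \<in> borel_measurable F"
  by (rule measF) measurable

lemma Psi_rec: "Psi y = ennreal qq * ennreal y + ennreal rr * (\<integral>\<^sup>+x. Psi (max y x) \<partial>F)"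
proof -
  have "(\<lambda>n. phi (Suc n) y) sums (\<Sum>n. phi (Suc n) y)" by (rule summable_sums) simp
  then have "(\<lambda>n. phi n y) sums ((\<Sum>n. phi (Suc n) y) + phi 0 y)" by (rule sums_Suc)
  then have "Psi y = (\<Sum>n. phi (Suc n) y) + phi 0 y" unfolding Psi_def by (rule sums_unique[symmetric])
  also have "(\<Sum>n. phi (Suc n) y) = ennreal rr * (\<Sum>n. \<integral>\<^sup>+x. phi n (max y x) \<partial>F)"
    unfolding phi_Suc by simp
  also have "(\<Sum>n. \<integral>\<^sup>+x. phi n (max y x) \<partial>F) = (\<integral>\<^sup>+x. Psi (max y x) \<partial>F)"
    unfolding Psi_def by (rule nn_integral_suminf[symmetric]) measurable
  finally show ?thesis by (simp add: phi_0 add.commute)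
qed

lemma phi_lower: "0 \<le> y \<Longrightarrow> ennreal (qq * rr ^ n * y) \<le> phi n y"
proof (induction n arbitrary: y)
  case 0 then show ?case by (simp add: phi_0 ennreal_mult less_imp_le[OF qq_props(1)])
next
  case (Suc n)
  have "ennreal (qq * rr ^ Suc n * y) = ennreal rr * (\<integral>\<^sup>+x. ennreal (qq * rr ^ n * y) \<partial>F)"
    using qq_props Suc.prems by (simp add: emeasure_space_1 ennreal_mult[symmetric] mult_ac)
  also have "\<dots> \<le> ennreal rr * (\<integral>\<^sup>+x. phi n (max y x) \<partial>F)"
  proof (intro mult_left_mono nn_integral_mono)
    fix x
    have "ennreal (qq * rr ^ n * y) \<le> ennreal (qq * rr ^ n * max y x)"
      using qq_props Suc.prems by (intro ennreal_leI mult_left_mono) auto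
    also have "\<dots> \<le> phi n (max y x)" using Suc.prems by (intro Suc.IH) auto
    finally show "ennreal (qq * rr ^ n * y) \<le> phi n (max y x)" .
  qed auto
  finally show ?case unfolding phi_Suc .
qed

lemma Psi_half: assumes "0 \<le> y" shows "ennreal (y / 2) \<le> Psi y"
proof -
  have "norm rr < 1" using qq_props(4,5) by simp
  then have "(\<lambda>n. rr ^ n) sums (1 / (1 - rr))" by (rule geometric_sums)
  then have s1: "(\<lambda>n. qq * y * rr ^ n) sums (qq * y * (1 / (1 - rr)))" by (rule sums_mult)
  have e:  "qq * y * (1 / (1 - rr)) = y / 2"
  proof -
    have "1 - rr = 2 * (1 - \<delta>) / (2 - \<delta>)" using d1 by (simp add: qq_props(3) field_simps)
    then have "qq * y * (1 / (1 - rr)) = qq * y * (2 - \<delta>) / (2 * (1 - \<delta>))" by simp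
    also have "qq * y * (2 - \<delta>) = (1 - \<delta>) * y" using d1 by (simp add: qq_def)
    also have "(1 - \<delta>) * y / (2 * (1 - \<delta>)) = y / 2" using d1 by (simp add: field_simps)
    finally show ?thesis .
  qed
  have s2: "(\<lambda>n. qq * y * rr ^ n) sums (y / 2)" using s1 unfolding e .
  have "(\<lambda>n. qq * rr ^ n * y) = (\<lambda>n. qq * y * rr ^ n)" by (rule ext) (simp add: mult_ac)
  then have "(\<lambda>n. qq * rr ^ n * y) sums (y / 2)" using s2 by simp
  then have "(\<lambda>n. ennreal (qq * rr ^ n * y)) sums ennreal (y / 2)"
    using qq_props assms by (subst sums_ennreal) auto
  then have "ennreal (y / 2) = (\<Sum>n. ennreal (qq * rr ^ n * y))" by (rule sums_unique)
  also have "\<dots> \<le> Psi y" unfolding Psi_def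
    by (intro suminf_le phi_lower assms) auto
  finally show ?thesis .
qed

end

context fenv
begin

definition vr :: real where "vr = enn2real vs"

lemma vr: "vs = ennreal vr" "0 \<le> vr"
  unfolding vr_def using vs_fin by (auto simp: ennreal_enn2real)

definition Lf :: "real \<Rightarrow> ennreal" where "Lf y = ennreal (1/4) * (ennreal y + W y)"

lemma int_Lf: "(\<integral>\<^sup>+x. Lf (max y x) \<partial>F) = ennreal (1/4) * (G (ennreal y) + G (W y))"
proof -
  have "(\<integral>\<^sup>+x. Lf (max y x) \<partial>F) = (\<integral>\<^sup>+x. ennreal (1/4) * (max (ennreal y) (ennreal x) + max (W y) (ennreal x)) \<partial>F)"
    unfolding Lf_def W_max ennreal_max_real ..
  also have "\<dots> = ennreal (1/4) * (\<integral>\<^sup>+x. max (ennreal y) (ennreal x) + max (W y) (ennreal x) \<partial>F)"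
    by (rule nn_integral_cmult) measurable
  also have "(\<integral>\<^sup>+x. max (ennreal y) (ennreal x) + max (W y) (ennreal x) \<partial>F) = G (ennreal y) + G (W y)"
    unfolding G_def by (rule nn_integral_add) measurable
  finally show ?thesis .
qed

lemma super: assumes y0: "0 \<le> y"
  shows "Lf y \<le> ennreal qq * ennreal y + ennreal rr * (\<integral>\<^sup>+x. Lf (max y x) \<partial>F)"
proof -
  define g1 where "g1 = enn2real (G (ennreal y))"
  have g1: "G (ennreal y) = ennreal g1" "0 \<le> g1"
    unfolding g1_def using G_fin[of "ennreal y"] by (auto simp: ennreal_enn2real)
  have "ennreal y \<le> ennreal g1" using G_ge[of "ennreal y"] g1 by simp
  then have yg1: "y \<le> g1" using g1 by (simp add: ennreal_le_iff)
  have qr: "0 < qq" "0 < rr" "rr * (2 - \<delta>) = \<delta>" "qq + rr / 2 = 1 / 2" "1/4 \<le> qq + rr / 4"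
    using qq_props d0 d1 by (auto simp: qq_def field_simps)
  show ?thesis
  proof (cases "y \<le> vr")
    case True
    have Wy: "W y = ennreal vr" unfolding W_def vr(1) using True by (simp add: max_def ennreal_leI)
    define g2 where "g2 = enn2real (G vs)"
    have g2: "G vs = ennreal g2" "0 \<le> g2"
      unfolding g2_def using G_fin[of vs] vs_fin by (auto simp: ennreal_enn2real)
    have "ennreal vr = ennreal (\<delta> * g2)" using vs_props(1) g2 d0 vr by (simp add: ennreal_mult)
    then have vg: "vr = \<delta> * g2" using vr g2 d0 by (subst (asm) ennreal_inj) auto
    have "ennreal y + G vs \<le> G (ennreal y) + vs" by (rule LB_key) (use True vr in \<open>simp add: ennreal_leI\<close>)
    then have "ennreal (y + g2) \<le> ennreal (g1 + vr)" using g1 g2 vr y0 by (simp add: ennreal_plus)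
    then have key: "y + g2 \<le> g1 + vr" using g1 vr by (subst (asm) ennreal_le_iff) auto
    have real: "(y + vr) / 4 \<le> qq * y + rr * ((g1 + g2) / 4)"
    proof -
      have "rr * (g1 + g2) \<ge> rr * (y + 2 * g2 - vr)" using key qr by (intro mult_left_mono) auto
      moreover have "rr * (2 * g2 - vr) = vr"
      proof -
        have "rr * (2 * g2 - vr) = rr * (2 - \<delta>) * g2" using vg by (simp add: algebra_simps)
        then show ?thesis using qr vg by simp
      qed
      ultimately have A: "rr * (g1 + g2) \<ge> rr * y + vr" by (simp add: algebra_simps)
      have B: "(1/4) * y \<le> (qq + rr / 4) * y" using qr y0 by (intro mult_right_mono) auto
      have C: "(qq + rr / 4) * y = qq * y + rr * y / 4" "rr * ((g1 + g2) / 4) = rr * (g1 + g2) / 4"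
        by (simp_all add: algebra_simps)
      have B': "y / 4 \<le> qq * y + rr * y / 4" using B C(1) by simp
      show ?thesis unfolding C(2) using A B' by (simp add: field_simps)
    qed
    have "Lf y = ennreal ((y + vr) / 4)"
      unfolding Lf_def Wy using y0 vr by (simp add: ennreal_mult[symmetric] ennreal_plus[symmetric] del: ennreal_plus)
    also have "\<dots> \<le> ennreal (qq * y + rr * ((g1 + g2) / 4))" using real by (rule ennreal_leI)
    also have "\<dots> = ennreal qq * ennreal y + ennreal rr * (ennreal (1/4) * (G (ennreal y) + G (W y)))"
      unfolding Wy g1 vr(1)[symmetric] g2 using qr y0 g1 g2
      by (simp add: ennreal_mult[symmetric] ennreal_plus[symmetric] del: ennreal_plus)
    finally show ?thesis unfolding int_Lf .
  next
    case False
    have Wy: "W y = ennreal y" unfolding W_def vr(1) using False vr(2) by (simp add: max_def ennreal_le_iff)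
    have real: "(y + y) / 4 \<le> qq * y + rr * ((g1 + g1) / 4)"
    proof -
      have "rr * g1 \<ge> rr * y" using yg1 qr by (intro mult_left_mono) auto
      moreover have "qq * y + rr * y / 2 = y / 2"
      proof -
        have "qq * y + rr * y / 2 = (qq + rr / 2) * y" by (simp add: algebra_simps)
        then show ?thesis using qr(4) by simp
      qed
      moreover have "rr * ((g1 + g1) / 4) = rr * g1 / 2" by simp
      ultimately show ?thesis by (simp add: field_simps)
    qed
    have "Lf y = ennreal ((y + y) / 4)"
      unfolding Lf_def Wy using y0 by (simp add: ennreal_mult[symmetric] ennreal_plus[symmetric] del: ennreal_plus)
    also have "\<dots> \<le> ennreal (qq * y + rr * ((g1 + g1) / 4))" using real by (rule ennreal_leI)
    also have "\<dots> = ennreal qq * ennreal y + ennreal rr * (ennreal (1/4) * (G (ennreal y) + G (W y)))"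
      unfolding Wy g1 using qr y0 g1
      by (simp add: ennreal_mult[symmetric] ennreal_plus[symmetric] del: ennreal_plus)
    finally show ?thesis unfolding int_Lf .
  qed
qed

end

context fenv
begin

lemma W_le: "W y \<le> ennreal y + vs"
  unfolding W_def by (auto simp: max_def intro: add_increasing add_increasing2)

lemma Lf_iter: "0 \<le> y \<Longrightarrow> Lf y \<le> Psi y + ennreal (rr ^ N * (vr / 4))"
proof (induction N arbitrary: y)
  case 0
  have "Lf y \<le> ennreal (1/4) * (ennreal y + (ennreal y + ennreal vr))"
    unfolding Lf_def using W_le[of y] vr(1) by (intro mult_left_mono add_left_mono) auto
  also have "\<dots> = ennreal (1/4 * (y + (y + vr)))"
    using 0 vr by (simp add: ennreal_mult[symmetric] ennreal_plus[symmetric] del: ennreal_plus)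
  also have "1/4 * (y + (y + vr)) = y / 2 + vr / 4" by simp
  also have "ennreal (y / 2 + vr / 4) = ennreal (y / 2) + ennreal (vr / 4)"
    using 0 vr by (simp add: ennreal_plus)
  also have "\<dots> \<le> Psi y + ennreal (vr / 4)"
    using Psi_half[OF 0] by (rule add_right_mono)
  finally show ?case by simp
next
  case (Suc N)
  have "Lf y \<le> ennreal qq * ennreal y + ennreal rr * (\<integral>\<^sup>+x. Lf (max y x) \<partial>F)"
    by (rule super[OF Suc.prems])
  also have "\<dots> \<le> ennreal qq * ennreal y + ennreal rr * (\<integral>\<^sup>+x. Psi (max y x) + ennreal (rr ^ N * (vr / 4)) \<partial>F)"
    using Suc.prems by (intro add_left_mono mult_left_mono nn_integral_mono Suc.IH) auto
  also have "(\<integral>\<^sup>+x. Psi (max y x) + ennreal (rr ^ N * (vr / 4)) \<partial>F) =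
      (\<integral>\<^sup>+x. Psi (max y x) \<partial>F) + ennreal (rr ^ N * (vr / 4))"
    by (subst nn_integral_add) (auto simp: emeasure_space_1)
  also have "ennreal qq * ennreal y + ennreal rr * ((\<integral>\<^sup>+x. Psi (max y x) \<partial>F) + ennreal (rr ^ N * (vr / 4)))
      = Psi y + ennreal rr * ennreal (rr ^ N * (vr / 4))"
    by (subst Psi_rec[of y]) (simp add: distrib_left add.assoc)
  also have "ennreal rr * ennreal (rr ^ N * (vr / 4)) = ennreal (rr ^ Suc N * (vr / 4))"
    using qq_props vr by (simp add: ennreal_mult[symmetric] mult.assoc)
  finally show ?case .
qed

lemma Lf_le_Psi: assumes y0: "0 \<le> y" shows "Lf y \<le> Psi y"
proof (rule ennreal_le_epsilon)
  fix e :: real assume e: "0 < e"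
  have "0 < e / (vr / 4 + 1)" using e vr by auto
  then obtain N where N: "rr ^ N < e / (vr / 4 + 1)"
    using real_arch_pow_inv[of "e / (vr / 4 + 1)" rr] qq_props by auto
  have "rr ^ N * (vr / 4) \<le> rr ^ N * (vr / 4 + 1)" using qq_props by (intro mult_left_mono) auto
  also have "\<dots> < e" using N vr by (simp add: field_simps)
  finally have "rr ^ N * (vr / 4) \<le> e" by simp
  then have "ennreal (rr ^ N * (vr / 4)) \<le> ennreal e" by (rule ennreal_leI)
  then show "Lf y \<le> Psi y + ennreal e"
    using Lf_iter[OF y0, of N] by (meson add_left_mono order_trans)
qed

lemma U_pbar: "h \<noteq> [] \<Longrightarrow> U_env \<delta> (\<lambda>_. qq) F h = Psi (best_so_far h)"
  unfolding U_env_def Psi_def by (simp add: phi_eq)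

lemma pbar_lower: assumes "h \<noteq> []" "0 \<le> best_so_far h"
  shows "ennreal (1/4) * W (best_so_far h) \<le> U_env \<delta> (\<lambda>_. qq) F h"
proof -
  have "ennreal (1/4) * W (best_so_far h) \<le> Lf (best_so_far h)"
    unfolding Lf_def by (intro mult_left_mono add_increasing) auto
  also have "\<dots> \<le> Psi (best_so_far h)" by (rule Lf_le_Psi[OF assms(2)])
  finally show ?thesis using U_pbar[OF assms(1)] by simp
qed

end

lemma ratio_ge:
  fixes U V K c :: ennreal
  assumes "V \<le> K" "c * K \<le> U" "0 < K" "K < top"
  shows "c \<le> U / V"
proof (cases "V = 0")
  case True
  show ?thesis
  proof (cases "U = 0")
    case True
    then have "c * K = 0" using assms(2) by simp
    then have "c = 0" using assms(3) by auto
    then show ?thesis by simp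
  next
    case False then show ?thesis using \<open>V = 0\<close> by simp
  qed
next
  case False
  have Vt: "V < top" using assms(1,4) by (rule le_less_trans)
  have "\<not> U / V < c"
  proof
    assume "U / V < c"
    then have "U < c * V" using False Vt by (simp add: divide_less_ennreal)
    moreover have "c * V \<le> c * K" using assms(1) by (rule mult_left_mono) simp
    ultimately show False using assms(2) by simp
  qed
  then show ?thesis by simp
qed

lemma quarter: "ennreal (1/4) = 1/4"
  using divide_ennreal[of 1 4] by simp

lemma env_fenv: "F \<in> envs X \<Longrightarrow> 0 < \<delta> \<Longrightarrow> \<delta> < 1 \<Longrightarrow> fenv F \<delta>"
  unfolding envs_def by (auto intro!: fenv.intro fenv_axioms.intro)

lemma qq_eq: "fenv F \<delta> \<Longrightarrow> fenv.qq \<delta> = (1 - \<delta>) / (2 - \<delta>)"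
  by (simp add: fenv.qq_def)

lemma posterior_pos:
  assumes fin: "finite (set_pmf \<mu>)" and lik: "\<And>G. G \<in> set_pmf \<mu> \<Longrightarrow> likelihood G h > 0"
    and F: "F \<in> set_pmf \<mu>"
  shows "posterior \<mu> h F > 0"
proof -
  have "pmf \<mu> F > 0" using F by (simp add: pmf_positive)
  moreover have "(\<Sum>G\<in>set_pmf \<mu>. pmf \<mu> G * likelihood G h) > 0"
    using fin F lik by (intro sum_pos) (auto simp: pmf_positive)
  ultimately show ?thesis unfolding posterior_def using lik[OF F] by simp
qed

lemma part_a:
  assumes d: "0 < \<delta>" "\<delta> < 1" and x0: "x0 > 0"
  shows "1/4 \<le> perf_ratio \<delta> X x0 (envs X) (\<lambda>_. (1 - \<delta>) / (2 - \<delta>))"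
  unfolding perf_ratio_def
proof (intro INF_greatest)
  fix h \<mu> assume h: "h \<in> histories X x0" and \<mu>: "\<mu> \<in> priors (consistent_envs (envs X) h)"
  obtain xs where hx: "h = x0 # xs" using h by (auto simp: histories_def)
  define y where "y = best_so_far h"
  have ypos: "0 < y" using bsf_ge_hd[of x0 xs] x0 hx y_def by simp
  have hne: "h \<noteq> []" using hx by simp
  have fin: "finite (set_pmf \<mu>)" and sub: "set_pmf \<mu> \<subseteq> consistent_envs (envs X) h"
    using \<mu> by (auto simp: priors_def)
  have fe: "fenv F \<delta>" if "F \<in> set_pmf \<mu>" for F
    using sub that d by (auto simp: consistent_envs_def intro: env_fenv)
  have lik: "likelihood F h > 0" if "F \<in> set_pmf \<mu>" for F
    using sub that by (auto simp: consistent_envs_def)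
  define K where "K = (\<Sum>F\<in>set_pmf \<mu>. ennreal (posterior \<mu> h F) * fenv.W F \<delta> y)"
  have V: "V_prior \<delta> \<mu> h \<le> K"
    unfolding V_prior_def U_prior_def K_def
  proof (intro SUP_least sum_mono mult_left_mono)
    fix p F assume "p \<in> decision_rules" "F \<in> set_pmf \<mu>"
    then show "U_env \<delta> p F h \<le> fenv.W F \<delta> y" using fenv.UB[OF fe] hne y_def by blast
  qed simp
  have U: "ennreal (1/4) * K \<le> U_prior \<delta> (\<lambda>_. (1 - \<delta>) / (2 - \<delta>)) \<mu> h"
    unfolding K_def U_prior_def sum_distrib_left
  proof (intro sum_mono)
    fix F assume F: "F \<in> set_pmf \<mu>"
    have "ennreal (1/4) * fenv.W F \<delta> y \<le> U_env \<delta> (\<lambda>_. (1 - \<delta>) / (2 - \<delta>)) F h"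
      using fenv.pbar_lower[OF fe[OF F] hne] ypos y_def qq_eq[OF fe[OF F]] by simp
    then show "ennreal (1/4) * (ennreal (posterior \<mu> h F) * fenv.W F \<delta> y)
        \<le> ennreal (posterior \<mu> h F) * U_env \<delta> (\<lambda>_. (1 - \<delta>) / (2 - \<delta>)) F h"
      by (metis (no_types, lifting) mult.left_commute mult_left_mono zero_le)
  qed
  obtain F0 where F0: "F0 \<in> set_pmf \<mu>" using set_pmf_not_empty[of \<mu>] by blast
  have "0 < ennreal (posterior \<mu> h F0) * fenv.W F0 \<delta> y"
  proof -
    have "0 < posterior \<mu> h F0" using posterior_pos[OF fin lik F0] by simp
    moreover have "0 < fenv.W F0 \<delta> y"
      using fenv.W_ge(1)[OF fe[OF F0], of y] ypos by (metis ennreal_less_zero_iff order_less_le_trans)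
    ultimately show ?thesis by (simp add: ennreal_zero_less_mult_iff)
  qed
  also have "\<dots> \<le> K" unfolding K_def by (rule member_le_sum[OF F0 _ fin]) simp
  finally have Kpos: "0 < K" .
  have Ktop: "K < top" unfolding K_def using fin
    by (auto simp: ennreal_mult_less_top fenv.W_fin[OF fe])
  show "1/4 \<le> U_prior \<delta> (\<lambda>_. (1 - \<delta>) / (2 - \<delta>)) \<mu> h / V_prior \<delta> \<mu> h"
    using ratio_ge[OF V U Kpos Ktop] unfolding quarter .
qed

definition envP :: "real pmf \<Rightarrow> real measure" where
  "envP P = distr (measure_pmf P) borel (\<lambda>x. x)"

lemma sets_envP[simp, measurable_cong]: "sets (envP P) = sets borel"
  by (simp add: envP_def)

lemma space_envP[simp]: "space (envP P) = UNIV"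
  by (simp add: envP_def)

lemma envP_single: "emeasure (envP P) {x} = ennreal (pmf P x)"
  unfolding envP_def by (subst emeasure_distr) (auto simp: emeasure_pmf_single)

lemma sum_indicator_single:
  "finite S \<Longrightarrow> x \<in> S \<Longrightarrow> (\<Sum>s\<in>S. f s * indicator {s} x) = (f x :: ennreal)"
proof -
  assume "finite S" "x \<in> S"
  have "(\<Sum>s\<in>S. f s * indicator {s} x) = (\<Sum>s\<in>S. if s = x then f s else 0)"
    by (intro sum.cong) (auto simp: indicator_def)
  also have "\<dots> = f x" using \<open>finite S\<close> \<open>x \<in> S\<close> by (simp add: sum.delta')
  finally show ?thesis .
qed

lemma envP_int:
  assumes fin: "finite (set_pmf P)"
  shows "(\<integral>\<^sup>+x. f x \<partial>envP P) = (\<Sum>s\<in>set_pmf P. ennreal (pmf P s) * f s)"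
proof -
  define S where "S = set_pmf P"
  have Sb: "S \<in> sets borel" using fin unfolding S_def by (simp add: finite_imp_closed borel_closed)
  have AE: "AE x in envP P. x \<in> S"
    unfolding envP_def using Sb by (subst AE_distr_iff) (auto simp: AE_measure_pmf S_def)
  have "AE x in envP P. f x = (\<Sum>s\<in>S. f s * indicator {s} x)"
    using AE by eventually_elim (metis fin S_def sum_indicator_single)
  then have "(\<integral>\<^sup>+x. f x \<partial>envP P) = (\<integral>\<^sup>+x. (\<Sum>s\<in>S. f s * indicator {s} x) \<partial>envP P)"
    by (rule nn_integral_cong_AE)
  also have "\<dots> = (\<Sum>s\<in>S. \<integral>\<^sup>+x. f s * indicator {s} x \<partial>envP P)"
    by (rule nn_integral_sum) simp
  also have "\<dots> = (\<Sum>s\<in>S. f s * ennreal (pmf P s))"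
    by (intro sum.cong refl) (simp add: nn_integral_cmult_indicator envP_single)
  finally show ?thesis unfolding S_def by (simp add: mult.commute)
qed

lemma sum_pmf_enn: "finite (set_pmf P) \<Longrightarrow> (\<Sum>s\<in>set_pmf P. ennreal (pmf P s)) = 1"
  by (simp add: sum_pmf_eq_1)

lemma envP_envs:
  assumes fin: "finite (set_pmf P)" and sub: "set_pmf P \<subseteq> X" and X: "X \<in> sets borel"
  shows "envP P \<in> envs X"
proof -
  have "prob_space (envP P)" unfolding envP_def
    by (rule measure_pmf.prob_space_distr) simp
  moreover have "emeasure (envP P) X = 1"
  proof -
    have "emeasure (envP P) X = (\<integral>\<^sup>+x. indicator X x \<partial>envP P)" using X by simp
    also have "\<dots> = (\<Sum>s\<in>set_pmf P. ennreal (pmf P s) * indicator X s)" by (rule envP_int[OF fin])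
    also have "\<dots> = (\<Sum>s\<in>set_pmf P. ennreal (pmf P s))"
      using sub by (intro sum.cong) (auto simp: indicator_def)
    finally show ?thesis using sum_pmf_enn[OF fin] by simp
  qed
  moreover have "(\<integral>\<^sup>+x. ennreal x \<partial>envP P) < \<infinity>"
    unfolding envP_int[OF fin] using fin by (simp add: ennreal_mult_less_top)
  ultimately show ?thesis unfolding envs_def by auto
qed

lemma prod_list_pos: "(\<And>x. x \<in> set xs \<Longrightarrow> 0 < f x) \<Longrightarrow> 0 < (\<Prod>x\<leftarrow>xs. (f x :: real))"
  by (induction xs) auto

lemma lik_pos:
  assumes "set (tl h) \<subseteq> set_pmf P"
  shows "likelihood (envP P) h > 0"
  unfolding likelihood_def
proof (rule prod_list_pos)
  fix x assume "x \<in> set (tl h)"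
  then have "pmf P x > 0" using assms by (auto simp: pmf_positive)
  then show "0 < measure (envP P) {x}" by (simp add: measure_def envP_single)
qed

lemma rec_partial:
  assumes fin: "finite (set_pmf P)"
  shows "(\<Sum>n<Suc N. stop_term \<delta> p (envP P) n h) = ennreal (p h) * ennreal (best_so_far h)
     + ennreal ((1 - p h) * \<delta>) * (\<Sum>s\<in>set_pmf P. ennreal (pmf P s) * (\<Sum>n<N. stop_term \<delta> p (envP P) n (h @ [s])))"
proof -
  have "(\<Sum>n<Suc N. stop_term \<delta> p (envP P) n h) = stop_term \<delta> p (envP P) 0 h + (\<Sum>n<N. stop_term \<delta> p (envP P) (Suc n) h)"
    by (rule sum.lessThan_Suc_shift)
  also have "(\<Sum>n<N. stop_term \<delta> p (envP P) (Suc n) h) =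
     ennreal ((1 - p h) * \<delta>) * (\<Sum>n<N. \<Sum>s\<in>set_pmf P. ennreal (pmf P s) * stop_term \<delta> p (envP P) n (h @ [s]))"
    by (simp add: envP_int[OF fin] sum_distrib_left)
  also have "(\<Sum>n<N. \<Sum>s\<in>set_pmf P. ennreal (pmf P s) * stop_term \<delta> p (envP P) n (h @ [s]))
      = (\<Sum>s\<in>set_pmf P. ennreal (pmf P s) * (\<Sum>n<N. stop_term \<delta> p (envP P) n (h @ [s])))"
    by (subst sum.swap) (simp add: sum_distrib_left)
  finally show ?thesis by simp
qed

lemma rec_full:
  assumes fin: "finite (set_pmf P)"
  shows "U_env \<delta> p (envP P) h = ennreal (p h) * ennreal (best_so_far h)
     + ennreal ((1 - p h) * \<delta>) * (\<Sum>s\<in>set_pmf P. ennreal (pmf P s) * U_env \<delta> p (envP P) (h @ [s]))"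
proof -
  let ?st = "\<lambda>n h. stop_term \<delta> p (envP P) n h"
  have "(\<lambda>n. ?st (Suc n) h) sums (\<Sum>n. ?st (Suc n) h)" by (rule summable_sums) simp
  then have "(\<lambda>n. ?st n h) sums ((\<Sum>n. ?st (Suc n) h) + ?st 0 h)" by (rule sums_Suc)
  then have "U_env \<delta> p (envP P) h = (\<Sum>n. ?st (Suc n) h) + ?st 0 h"
    unfolding U_env_def by (rule sums_unique[symmetric])
  also have "(\<Sum>n. ?st (Suc n) h) = ennreal ((1 - p h) * \<delta>) * (\<Sum>n. \<Sum>s\<in>set_pmf P. ennreal (pmf P s) * ?st n (h @ [s]))"
    by (simp add: envP_int[OF fin])
  also have "(\<Sum>n. \<Sum>s\<in>set_pmf P. ennreal (pmf P s) * ?st n (h @ [s]))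
      = (\<Sum>s\<in>set_pmf P. \<Sum>n. ennreal (pmf P s) * ?st n (h @ [s]))"
    by (rule suminf_sum) simp
  also have "\<dots> = (\<Sum>s\<in>set_pmf P. ennreal (pmf P s) * U_env \<delta> p (envP P) (h @ [s]))"
    unfolding U_env_def by simp
  finally show ?thesis by (simp add: add.commute)
qed

lemma partial_bound:
  assumes fin: "finite (set_pmf P)" and p: "p \<in> decision_rules" and d: "0 < \<delta>" "\<delta> < 1"
    and M: "\<forall>s\<in>set_pmf P. s \<le> M" "0 \<le> M"
  shows "best_so_far h \<le> M \<Longrightarrow> h \<noteq> [] \<Longrightarrow> (\<Sum>n<N. stop_term \<delta> p (envP P) n h) \<le> ennreal M"
proof (induction N arbitrary: h)
  case 0 then show ?case by simp
next
  case (Suc N)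
  have p01: "0 \<le> p h" "p h \<le> 1" using rule_bounds[OF p] by auto
  have "(\<Sum>n<Suc N. stop_term \<delta> p (envP P) n h) \<le> ennreal (p h) * ennreal M
     + ennreal ((1 - p h) * \<delta>) * (\<Sum>s\<in>set_pmf P. ennreal (pmf P s) * ennreal M)"
    unfolding rec_partial[OF fin]
    using Suc.prems M by (intro add_mono mult_left_mono sum_mono Suc.IH ennreal_leI) (auto simp: bsf_snoc)
  also have "(\<Sum>s\<in>set_pmf P. ennreal (pmf P s) * ennreal M) = ennreal M"
    by (simp add: sum_distrib_right[symmetric] sum_pmf_enn[OF fin] del: sum_ennreal)
  also have "ennreal (p h) * ennreal M + ennreal ((1 - p h) * \<delta>) * ennreal M = ennreal (p h * M + (1 - p h) * \<delta> * M)"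
    using p01 d M by (simp add: ennreal_mult ennreal_plus)
  also have "\<dots> \<le> ennreal M"
  proof (rule ennreal_leI)
    have "(1 - p h) * \<delta> \<le> (1 - p h) * 1" using p01 d by (intro mult_left_mono) auto
    then have "(1 - p h) * \<delta> * M \<le> (1 - p h) * M" using M by (intro mult_right_mono) auto
    then show "p h * M + (1 - p h) * \<delta> * M \<le> M" by (simp add: algebra_simps)
  qed
  finally show ?case .
qed

lemma U_bound:
  assumes fin: "finite (set_pmf P)" and p: "p \<in> decision_rules" and d: "0 < \<delta>" "\<delta> < 1"
    and M: "\<forall>s\<in>set_pmf P. s \<le> M" "0 \<le> M" and h: "best_so_far h \<le> M" "h \<noteq> []"
  shows "U_env \<delta> p (envP P) h \<le> ennreal M"
  unfolding U_env_def
  using ennreal_suminf_bound_add[where y=0 and f="\<lambda>n. stop_term \<delta> p (envP P) n h"]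
    partial_bound[OF assms] by simp

lemma enn2real_rec:
  assumes "0 \<le> a" "0 \<le> b" "0 \<le> c" "\<forall>s\<in>S. 0 \<le> w s" "\<forall>s\<in>S. f s < top"
  shows "enn2real (ennreal a * ennreal b + ennreal c * (\<Sum>s\<in>S. ennreal (w s) * f s))
       = a * b + c * (\<Sum>s\<in>S. w s * enn2real (f s))"
proof -
  have "(\<Sum>s\<in>S. ennreal (w s) * f s) = (\<Sum>s\<in>S. ennreal (w s * enn2real (f s)))"
    using assms(4,5) by (intro sum.cong refl) (simp add: ennreal_mult ennreal_enn2real less_top[symmetric])
  also have "\<dots> = ennreal (\<Sum>s\<in>S. w s * enn2real (f s))"
    using assms(4) by (intro sum_ennreal) (simp add: enn2real_nonneg)
  finally have eq: "ennreal a * ennreal b + ennreal c * (\<Sum>s\<in>S. ennreal (w s) * f s)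
      = ennreal (a * b + c * (\<Sum>s\<in>S. w s * enn2real (f s)))"
    using assms by (simp add: ennreal_mult ennreal_plus sum_nonneg enn2real_nonneg)
  have X0: "0 \<le> a * b + c * (\<Sum>s\<in>S. w s * enn2real (f s))"
    using assms by (simp add: sum_nonneg enn2real_nonneg)
  show ?thesis by (simp only: eq enn2real_ennreal[OF X0])
qed

locale fin_setting =
  fixes \<delta> :: real and p :: "real list \<Rightarrow> real" and P :: "real pmf"
  assumes d0: "0 < \<delta>" and d1: "\<delta> < 1" and p: "p \<in> decision_rules" and fin: "finite (set_pmf P)"
begin

definition MM :: "real list \<Rightarrow> real" where "MM h = max (best_so_far h) (Max (set_pmf P))"

lemma MM: "\<forall>s\<in>set_pmf P. s \<le> MM h" "best_so_far h \<le> MM h"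
  unfolding MM_def using fin by (auto intro: max.coboundedI2 Max_ge)

lemma U_fin: "h \<noteq> [] \<Longrightarrow> 0 \<le> best_so_far h \<Longrightarrow> U_env \<delta> p (envP P) h < top"
  using U_bound[OF fin p d0 d1 MM(1), of h] MM(2)[of h] by (metis ennreal_less_top le_less_trans max.coboundedI1 MM_def)

lemma S_le_U: "(\<Sum>n<N. stop_term \<delta> p (envP P) n h) \<le> U_env \<delta> p (envP P) h"
  unfolding U_env_def by (rule sum_le_suminf) auto

definition uR :: "real list \<Rightarrow> real" where "uR h = enn2real (U_env \<delta> p (envP P) h)"
definition sR :: "nat \<Rightarrow> real list \<Rightarrow> real" where "sR N h = enn2real (\<Sum>n<N. stop_term \<delta> p (envP P) n h)"

lemma U_eq: "h \<noteq> [] \<Longrightarrow> 0 \<le> best_so_far h \<Longrightarrow> U_env \<delta> p (envP P) h = ennreal (uR h)"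
  unfolding uR_def using U_fin by (simp add: ennreal_enn2real less_top)

lemma S_fin: "h \<noteq> [] \<Longrightarrow> 0 \<le> best_so_far h \<Longrightarrow> (\<Sum>n<N. stop_term \<delta> p (envP P) n h) < top"
  using S_le_U U_fin le_less_trans by blast

lemma S_eq: "h \<noteq> [] \<Longrightarrow> 0 \<le> best_so_far h \<Longrightarrow> (\<Sum>n<N. stop_term \<delta> p (envP P) n h) = ennreal (sR N h)"
  unfolding sR_def using S_fin by (simp add: ennreal_enn2real less_top)

lemma uR_nonneg: "0 \<le> uR h" and sR_nonneg: "0 \<le> sR N h"
  unfolding uR_def sR_def by (simp_all add: enn2real_nonneg)

lemma sR_le_uR: "h \<noteq> [] \<Longrightarrow> 0 \<le> best_so_far h \<Longrightarrow> sR N h \<le> uR h"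
  unfolding uR_def sR_def using S_le_U U_fin by (intro enn2real_mono) (auto simp: less_top)

lemma p01: "0 \<le> p h" "p h \<le> 1" using rule_bounds[OF p] by auto

lemma child: "h \<noteq> [] \<Longrightarrow> 0 \<le> best_so_far h \<Longrightarrow> h @ [s] \<noteq> [] \<and> 0 \<le> best_so_far (h @ [s])"
  by (auto simp: bsf_snoc)

lemma uR_rec: assumes "h \<noteq> []" "0 \<le> best_so_far h"
  shows "uR h = p h * best_so_far h + (1 - p h) * \<delta> * (\<Sum>s\<in>set_pmf P. pmf P s * uR (h @ [s]))"
proof -
  have "uR h = enn2real (ennreal (p h) * ennreal (best_so_far h)
     + ennreal ((1 - p h) * \<delta>) * (\<Sum>s\<in>set_pmf P. ennreal (pmf P s) * U_env \<delta> p (envP P) (h @ [s])))"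
    unfolding uR_def by (subst rec_full[OF fin]) simp
  also have "\<dots> = p h * best_so_far h + (1 - p h) * \<delta> * (\<Sum>s\<in>set_pmf P. pmf P s * uR (h @ [s]))"
    unfolding uR_def using p01[of h] d0 d1 assms
    by (intro enn2real_rec) (auto intro!: U_fin simp: bsf_snoc)
  finally show ?thesis .
qed

lemma sR_0: "sR 0 h = 0" unfolding sR_def by simp

lemma sR_rec: assumes "h \<noteq> []" "0 \<le> best_so_far h"
  shows "sR (Suc N) h = p h * best_so_far h + (1 - p h) * \<delta> * (\<Sum>s\<in>set_pmf P. pmf P s * sR N (h @ [s]))"
proof -
  have "sR (Suc N) h = enn2real (ennreal (p h) * ennreal (best_so_far h)
     + ennreal ((1 - p h) * \<delta>) * (\<Sum>s\<in>set_pmf P. ennreal (pmf P s) * (\<Sum>n<N. stop_term \<delta> p (envP P) n (h @ [s]))))"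
    unfolding sR_def by (subst rec_partial[OF fin]) simp
  also have "\<dots> = p h * best_so_far h + (1 - p h) * \<delta> * (\<Sum>s\<in>set_pmf P. pmf P s * sR N (h @ [s]))"
    unfolding sR_def using p01[of h] d0 d1 assms
    by (intro enn2real_rec) (auto intro!: S_fin simp: bsf_snoc simp del: ennreal_sum_less_top)
  finally show ?thesis .
qed

lemma U_le_of_sR: assumes "h \<noteq> []" "0 \<le> best_so_far h" "\<And>N. sR N h \<le> B"
  shows "U_env \<delta> p (envP P) h \<le> ennreal B"
  unfolding U_env_def
proof (rule ennreal_suminf_bound_add[where y=0, simplified])
  fix N show "(\<Sum>n<N. stop_term \<delta> p (envP P) n h) \<le> ennreal B"
    using S_eq[OF assms(1,2)] assms(3) by (simp add: ennreal_leI)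
qed

lemma uR_le: assumes "h \<noteq> []" "0 \<le> best_so_far h" "\<forall>s\<in>set_pmf P. s \<le> M" "best_so_far h \<le> M"
  shows "uR h \<le> M"
proof -
  have "ennreal (uR h) \<le> ennreal M" using U_bound[OF fin p d0 d1 assms(3) _ assms(4,1)] assms U_eq by simp
  then show ?thesis using assms by (subst (asm) ennreal_le_iff) auto
qed

end

definition PF :: "real \<Rightarrow> real \<Rightarrow> real pmf \<Rightarrow> real pmf" where
  "PF \<epsilon> L P = embed_pmf (\<lambda>x. if x = L then \<epsilon> else (1 - \<epsilon>) * pmf P x)"

lemma PF_props:
  assumes e: "0 < \<epsilon>" "\<epsilon> < 1" and L: "L \<notin> set_pmf P" and fin: "finite (set_pmf P)"
  shows "pmf (PF \<epsilon> L P) x = (if x = L then \<epsilon> else (1 - \<epsilon>) * pmf P x)"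
    and "set_pmf (PF \<epsilon> L P) = insert L (set_pmf P)"
    and "finite (set_pmf (PF \<epsilon> L P))"
proof -
  define f where "f = (\<lambda>x. if x = L then \<epsilon> else (1 - \<epsilon>) * pmf P x)"
  have nn: "\<And>x. 0 \<le> f x" using e by (auto simp: f_def)
  have "(\<integral>\<^sup>+x. ennreal (f x) \<partial>count_space UNIV) = (\<Sum>x\<in>insert L (set_pmf P). ennreal (f x))"
    using fin by (intro nn_integral_count_space') (auto simp: f_def set_pmf_eq)
  also have "\<dots> = ennreal (\<Sum>x\<in>insert L (set_pmf P). f x)" using nn by (simp del: sum.insert)
  also have "(\<Sum>x\<in>insert L (set_pmf P). f x) = \<epsilon> + (\<Sum>x\<in>set_pmf P. (1 - \<epsilon>) * pmf P x)"
    using fin L by (simp add: f_def) (intro sum.cong, auto)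
  also have "\<dots> = 1" using fin by (simp add: sum_distrib_left[symmetric] sum_pmf_eq_1)
  finally have prob: "(\<integral>\<^sup>+x. ennreal (f x) \<partial>count_space UNIV) = 1" by simp
  have pm: "pmf (PF \<epsilon> L P) x = f x" for x
    unfolding PF_def f_def[symmetric] by (rule pmf_embed_pmf[OF nn prob])
  then show "pmf (PF \<epsilon> L P) x = (if x = L then \<epsilon> else (1 - \<epsilon>) * pmf P x)" by (simp add: f_def)
  show s: "set_pmf (PF \<epsilon> L P) = insert L (set_pmf P)"
    using e by (auto simp: set_pmf_eq pm f_def)
  show "finite (set_pmf (PF \<epsilon> L P))" unfolding s using fin by simp
qed

lemma sum_PF:
  assumes e: "0 < \<epsilon>" "\<epsilon> < 1" and L: "L \<notin> set_pmf P" and fin: "finite (set_pmf P)"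
  shows "(\<Sum>s\<in>set_pmf (PF \<epsilon> L P). pmf (PF \<epsilon> L P) s * g s)
       = \<epsilon> * g L + (1 - \<epsilon>) * (\<Sum>s\<in>set_pmf P. pmf P s * g s)"
proof -
  have "(\<Sum>s\<in>set_pmf (PF \<epsilon> L P). pmf (PF \<epsilon> L P) s * g s)
      = \<epsilon> * g L + (\<Sum>s\<in>set_pmf P. pmf (PF \<epsilon> L P) s * g s)"
    unfolding PF_props(2)[OF assms] using fin L by (simp add: PF_props(1)[OF assms])
  also have "(\<Sum>s\<in>set_pmf P. pmf (PF \<epsilon> L P) s * g s) = (\<Sum>s\<in>set_pmf P. (1 - \<epsilon>) * (pmf P s * g s))"
    using L by (intro sum.cong) (auto simp: PF_props(1)[OF assms])
  finally show ?thesis by (simp add: sum_distrib_left)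
qed

lemma weighted_sum_le:
  assumes fin: "finite (set_pmf P)" and le: "\<And>s. s \<in> set_pmf P \<Longrightarrow> f s \<le> (g s :: real)"
  shows "(\<Sum>s\<in>set_pmf P. pmf P s * f s) \<le> (\<Sum>s\<in>set_pmf P. pmf P s * g s)"
  using le by (intro sum_mono mult_left_mono) auto

lemma weighted_const:
  assumes fin: "finite (set_pmf P)"
  shows "(\<Sum>s\<in>set_pmf P. pmf P s * c) = (c :: real)"
  using fin by (simp add: sum_distrib_right[symmetric] sum_pmf_eq_1)

lemma claim:
  assumes d0: "0 < \<delta>" and d1: "\<delta> < 1" and p: "p \<in> decision_rules" and fin: "finite (set_pmf P)"
    and e: "0 < \<epsilon>" "\<epsilon> < 1" and sy: "\<forall>s\<in>set_pmf P. s \<le> y" and yL: "y < L" and y0: "0 < y"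
    and Ab0: "0 \<le> Ab"
    and Rpres: "\<And>h s. R h \<Longrightarrow> s \<in> set_pmf P \<Longrightarrow> R (h @ [s])"
    and hyp: "\<And>h. R h \<Longrightarrow> h \<noteq> [] \<Longrightarrow> best_so_far h = y \<Longrightarrow>
                 U_env \<delta> p (envP (PF \<epsilon> L P)) (h @ [L]) \<le> ennreal (L * Ab)"
  shows "R h \<Longrightarrow> h \<noteq> [] \<Longrightarrow> best_so_far h = y \<Longrightarrow>
    y * fin_setting.sR \<delta> p (PF \<epsilon> L P) N h + (\<delta> * \<epsilon> * L * Ab / (1 - \<delta>)) * fin_setting.uR \<delta> p P h
      \<le> y * fin_setting.uR \<delta> p P h + (\<delta> * \<epsilon> * L * Ab / (1 - \<delta>)) * y"
proof (induction N arbitrary: h)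
  have Lnot: "L \<notin> set_pmf P" using sy yL by force
  interpret G: fin_setting \<delta> p P using d0 d1 p fin by unfold_locales
  interpret FF: fin_setting \<delta> p "PF \<epsilon> L P" using d0 d1 p PF_props(3)[OF e Lnot fin] by unfold_locales
  define K where "K = \<delta> * \<epsilon> * L * Ab / (1 - \<delta>)"
  have K0: "0 \<le> K" unfolding K_def using d0 d1 e yL y0 Ab0 by simp
  have Kd: "K * (1 - \<delta>) = \<delta> * \<epsilon> * L * Ab" unfolding K_def using d1 by simp
  {
    case 0
    have "G.uR h \<le> y" using G.uR_le[of h y] 0 sy y0 by simp
    then have "K * G.uR h \<le> K * y" using K0 by (rule mult_left_mono)
    moreover have "0 \<le> y * G.uR h" using y0 G.uR_nonneg by simp
    ultimately show ?case unfolding K_def[symmetric] FF.sR_0 by simp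
  next
    case (Suc N)
    have hy: "0 \<le> best_so_far h" using Suc.prems y0 by simp
    have chy: "best_so_far (h @ [s]) = y" if "s \<in> set_pmf P" for s
      using that sy Suc.prems by (auto simp: bsf_snoc max_def)
    define c where "c = (1 - p h) * \<delta>"
    have c0: "0 \<le> c" unfolding c_def using G.p01[of h] d0 by simp
    define SL where "SL = FF.sR N (h @ [L])"
    define \<sigma> where "\<sigma> = (\<Sum>s\<in>set_pmf P. pmf P s * FF.sR N (h @ [s]))"
    define \<beta> where "\<beta> = (\<Sum>s\<in>set_pmf P. pmf P s * G.uR (h @ [s]))"
    have Frec: "FF.sR (Suc N) h = p h * y + c * (\<epsilon> * SL + (1 - \<epsilon>) * \<sigma>)"
      unfolding FF.sR_rec[OF Suc.prems(2) hy] sum_PF[OF e Lnot fin] SL_def \<sigma>_def c_def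
      using Suc.prems by simp
    have Grec: "G.uR h = p h * y + c * \<beta>"
      unfolding G.uR_rec[OF Suc.prems(2) hy] \<beta>_def c_def using Suc.prems by simp
    have IHs: "y * \<sigma> + K * \<beta> \<le> y * \<beta> + K * y"
    proof -
      have "(\<Sum>s\<in>set_pmf P. pmf P s * (y * FF.sR N (h @ [s]) + K * G.uR (h @ [s])))
          \<le> (\<Sum>s\<in>set_pmf P. pmf P s * (y * G.uR (h @ [s]) + K * y))"
        using fin
      proof (rule weighted_sum_le)
        fix s assume s: "s \<in> set_pmf P"
        show "y * FF.sR N (h @ [s]) + K * G.uR (h @ [s]) \<le> y * G.uR (h @ [s]) + K * y"
          using Suc.IH[of "h @ [s]"] Rpres[OF Suc.prems(1) s] chy[OF s] unfolding K_def by simp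
      qed
      also have "(\<Sum>s\<in>set_pmf P. pmf P s * (y * G.uR (h @ [s]) + K * y)) = y * \<beta> + K * y"
        unfolding \<beta>_def using weighted_const[OF fin, of "K * y"]
        by (simp add: algebra_simps sum.distrib sum_distrib_left)
      also have "(\<Sum>s\<in>set_pmf P. pmf P s * (y * FF.sR N (h @ [s]) + K * G.uR (h @ [s]))) = y * \<sigma> + K * \<beta>"
        unfolding \<beta>_def \<sigma>_def by (simp add: algebra_simps sum.distrib sum_distrib_left)
      finally show ?thesis .
    qed
    have \<beta>y: "\<beta> \<le> y"
    proof -
      have "\<beta> \<le> (\<Sum>s\<in>set_pmf P. pmf P s * y)" unfolding \<beta>_def using fin
        by (rule weighted_sum_le) (use G.uR_le Suc.prems sy chy y0 in \<open>auto simp: bsf_snoc\<close>)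
      then show ?thesis using weighted_const[OF fin] by simp
    qed
    have \<beta>0: "0 \<le> \<beta>" unfolding \<beta>_def by (intro sum_nonneg) (simp add: G.uR_nonneg)
    have SLb: "SL \<le> L * Ab"
    proof -
      have hL: "h @ [L] \<noteq> []" "0 \<le> best_so_far (h @ [L])" using hy Suc.prems(2) by (auto simp: bsf_snoc)
      have "ennreal (FF.uR (h @ [L])) \<le> ennreal (L * Ab)"
        using hyp[OF Suc.prems] FF.U_eq[OF hL] by simp
      then have "FF.uR (h @ [L]) \<le> L * Ab" using yL y0 Ab0 by (subst (asm) ennreal_le_iff) auto
      then show ?thesis unfolding SL_def using FF.sR_le_uR[OF hL, of N] by simp
    qed
    have "y * FF.sR (Suc N) h + K * G.uR h
        = p h * y * y + c * \<epsilon> * y * SL + c * (1 - \<epsilon>) * (y * \<sigma>) + K * p h * y + K * c * \<beta>"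
      unfolding Frec Grec by (simp add: algebra_simps)
    also have "\<dots> \<le> p h * y * y + c * \<epsilon> * y * (L * Ab) + c * (1 - \<epsilon>) * (y * \<beta> + K * y - K * \<beta>) + K * p h * y + K * c * \<beta>"
    proof -
      have "c * \<epsilon> * y * SL \<le> c * \<epsilon> * y * (L * Ab)" using c0 e y0 SLb by (intro mult_left_mono) auto
      moreover have "c * (1 - \<epsilon>) * (y * \<sigma>) \<le> c * (1 - \<epsilon>) * (y * \<beta> + K * y - K * \<beta>)"
        using c0 e IHs by (intro mult_left_mono) auto
      ultimately show ?thesis by simp
    qed
    also have "c * \<epsilon> * y * (L * Ab) = (1 - p h) * y * (K * (1 - \<delta>))"
      unfolding Kd c_def by (simp add: algebra_simps)
    also have "p h * y * y + (1 - p h) * y * (K * (1 - \<delta>)) + c * (1 - \<epsilon>) * (y * \<beta> + K * y - K * \<beta>) + K * p h * y + K * c * \<beta>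
        = y * (p h * y + c * \<beta>) + K * y - c * \<epsilon> * (K * (y - \<beta>) + y * \<beta>)"
      unfolding c_def by (simp add: algebra_simps)
    also have "\<dots> \<le> y * (p h * y + c * \<beta>) + K * y"
    proof -
      have "0 \<le> K * (y - \<beta>) + y * \<beta>" using K0 \<beta>y \<beta>0 y0 by simp
      then have "0 \<le> c * \<epsilon> * (K * (y - \<beta>) + y * \<beta>)" using c0 e by simp
      then show ?thesis by simp
    qed
    finally show ?case unfolding K_def[symmetric] Grec[symmetric] .
  }
qed

lemma V_lower:
  assumes d0: "0 < \<delta>" and d1: "\<delta> < 1" and fin: "finite (set_pmf P)"
    and e: "0 < \<epsilon>" "\<epsilon> < 1" and sL: "\<forall>s\<in>set_pmf P. s < L"
    and h: "h \<noteq> []" "0 \<le> best_so_far h" "best_so_far h < L"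
  shows "ennreal (\<delta> * \<epsilon> * L / (1 - \<delta> + \<delta> * \<epsilon>))
     \<le> U_env \<delta> (\<lambda>h. if L \<le> best_so_far h then 1 else 0) (envP (PF \<epsilon> L P)) h"
proof -
  define p' :: "real list \<Rightarrow> real" where "p' = (\<lambda>h. if L \<le> best_so_far h then 1 else 0)"
  have p': "p' \<in> decision_rules" unfolding decision_rules_def p'_def by auto
  have Lnot: "L \<notin> set_pmf P" using sL by force
  interpret FF: fin_setting \<delta> p' "PF \<epsilon> L P" using d0 d1 p' PF_props(3)[OF e Lnot fin] by unfold_locales
  define J where "J = {h'. h' \<noteq> [] \<and> 0 \<le> best_so_far h' \<and> best_so_far h' < L}"
  define m where "m = Inf (FF.uR ` J)"
  have bdd: "bdd_below (FF.uR ` J)" by (rule bdd_belowI[of _ 0]) (auto simp: FF.uR_nonneg)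
  have hJ: "h \<in> J" using h by (simp add: J_def)
  have L0: "0 < L" using h by simp
  have step: "\<delta> * (\<epsilon> * L + (1 - \<epsilon>) * m) \<le> FF.uR h'" if h': "h' \<in> J" for h'
  proof -
    have h'1: "h' \<noteq> []" "0 \<le> best_so_far h'" "best_so_far h' < L" using h' by (auto simp: J_def)
    have pz: "p' h' = 0" using h'1 by (simp add: p'_def)
    have uL: "FF.uR (h' @ [L]) = L"
    proof -
      have c: "h' @ [L] \<noteq> []" "0 \<le> best_so_far (h' @ [L])" using h'1 by (auto simp: bsf_snoc)
      have "best_so_far (h' @ [L]) = L" using h'1 by (simp add: bsf_snoc)
      then show ?thesis using FF.uR_rec[OF c] by (simp add: p'_def)
    qed
    have "(1 - \<epsilon>) * m \<le> (1 - \<epsilon>) * (\<Sum>s\<in>set_pmf P. pmf P s * FF.uR (h' @ [s]))"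
    proof (intro mult_left_mono)
      have "(\<Sum>s\<in>set_pmf P. pmf P s * m) \<le> (\<Sum>s\<in>set_pmf P. pmf P s * FF.uR (h' @ [s]))"
        using fin
      proof (rule weighted_sum_le)
        fix s assume s: "s \<in> set_pmf P"
        have "h' @ [s] \<in> J" using h'1 sL s by (auto simp: J_def bsf_snoc)
        then show "m \<le> FF.uR (h' @ [s])" unfolding m_def using bdd by (intro cInf_lower) auto
      qed
      then show "m \<le> (\<Sum>s\<in>set_pmf P. pmf P s * FF.uR (h' @ [s]))" using weighted_const[OF fin] by simp
    qed (use e in auto)
    then have "\<delta> * (\<epsilon> * L + (1 - \<epsilon>) * m) \<le> \<delta> * (\<epsilon> * FF.uR (h' @ [L]) + (1 - \<epsilon>) * (\<Sum>s\<in>set_pmf P. pmf P s * FF.uR (h' @ [s])))"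
      using d0 uL by (intro mult_left_mono) auto
    also have "\<dots> = FF.uR h'"
      unfolding FF.uR_rec[OF h'1(1,2)] sum_PF[OF e Lnot fin] pz by simp
    finally show ?thesis .
  qed
  have "\<delta> * (\<epsilon> * L + (1 - \<epsilon>) * m) \<le> m"
    unfolding m_def[of] using hJ by (intro cInf_greatest) (auto intro: step[unfolded m_def])
  then have "\<delta> * \<epsilon> * L \<le> m * (1 - \<delta> + \<delta> * \<epsilon>)" by (simp add: algebra_simps)
  moreover have pos: "0 < 1 - \<delta> + \<delta> * \<epsilon>" using d0 d1 e by (smt (verit) mult_pos_pos)
  ultimately have "\<delta> * \<epsilon> * L / (1 - \<delta> + \<delta> * \<epsilon>) \<le> m" by (simp add: divide_le_eq)
  also have "m \<le> FF.uR h" unfolding m_def using bdd hJ by (intro cInf_lower) auto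
  finally have "ennreal (\<delta> * \<epsilon> * L / (1 - \<delta> + \<delta> * \<epsilon>)) \<le> ennreal (FF.uR h)" by (rule ennreal_leI)
  then show ?thesis using FF.U_eq[OF h(1,2)] unfolding p'_def by simp
qed

lemma final_ineq:
  fixes \<delta> \<epsilon> \<eta> y L Ab a :: real
  assumes d0: "0 < \<delta>" and d1: "\<delta> < 1" and e0: "0 < \<epsilon>" and e1: "\<epsilon> < 1"
    and e\<eta>: "\<delta> * \<epsilon> \<le> \<eta> * (1 - \<delta>)" and \<eta>: "0 < \<eta>" and y0: "0 < y"
    and L: "y \<le> \<delta> * \<epsilon> * L * \<eta>"
    and Ab: "0 \<le> Ab" "Ab \<le> 1" and a: "0 \<le> a" "a \<le> 1" "a \<le> Ab" "Ab - \<eta> \<le> a"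
  shows "a * y + (\<delta> * \<epsilon> * L * Ab / (1 - \<delta>)) * (1 - a) \<le> (1/4 + 3 * \<eta>) * (\<delta> * \<epsilon> * L / (1 - \<delta> + \<delta> * \<epsilon>))"
proof -
  define D where "D = 1 - \<delta> + \<delta> * \<epsilon>"
  define Q where "Q = \<delta> * \<epsilon> * L"
  have Q0: "0 < Q" using L y0 \<eta> d0 e0 unfolding Q_def
    by (metis mult_pos_pos zero_less_mult_pos2 order_less_le_trans mult.commute)
  have D0: "0 < D" unfolding D_def using d0 d1 e0 by (smt (verit) mult_pos_pos)
  have D1: "D \<le> 1" unfolding D_def using d0 e1 by (smt (verit) mult_left_le)
  have i: "a * y * D \<le> Q * \<eta>"
  proof -
    have "a * y * D \<le> 1 * y * 1" using a y0 D0 D1 by (intro mult_mono) auto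
    then show ?thesis using L unfolding Q_def by simp
  qed
  have ii: "Ab * (1 - a) \<le> 1/4 + \<eta>"
  proof -
    have "Ab * (1 - a) \<le> Ab * (1 - Ab + \<eta>)" using Ab a by (intro mult_left_mono) auto
    also have "\<dots> = Ab * (1 - Ab) + Ab * \<eta>" by (simp add: algebra_simps)
    also have "Ab * (1 - Ab) \<le> 1/4"
    proof -
      have "Ab * (1 - Ab) = 1/4 - (Ab - 1/2)^2" by (simp add: power2_eq_square algebra_simps)
      then show ?thesis by simp
    qed
    also have "Ab * \<eta> \<le> 1 * \<eta>" using Ab \<eta> by (intro mult_right_mono) auto
    finally show ?thesis by simp
  qed
  have iii: "Ab * (1 - a) \<le> 1" using Ab a by (simp add: mult_le_one)
  have Dd: "D / (1 - \<delta>) = 1 + \<delta> * \<epsilon> / (1 - \<delta>)" unfolding D_def using d1 by (simp add: field_simps)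
  have de: "\<delta> * \<epsilon> / (1 - \<delta>) \<le> \<eta>" using e\<eta> d1 by (simp add: divide_le_eq)
  have iv: "Ab * (1 - a) * (D / (1 - \<delta>)) \<le> 1/4 + 2 * \<eta>"
  proof -
    have "Ab * (1 - a) * (D / (1 - \<delta>)) = Ab * (1 - a) + Ab * (1 - a) * (\<delta> * \<epsilon> / (1 - \<delta>))"
      unfolding Dd by (simp add: algebra_simps)
    also have "Ab * (1 - a) * (\<delta> * \<epsilon> / (1 - \<delta>)) \<le> 1 * \<eta>"
      using iii de Ab a d0 d1 e0 by (intro mult_mono) auto
    finally show ?thesis using ii by simp
  qed
  have "(a * y + (Q * Ab / (1 - \<delta>)) * (1 - a)) * D = a * y * D + Q * (Ab * (1 - a) * (D / (1 - \<delta>)))"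
    by (simp add: algebra_simps)
  also have "\<dots> \<le> Q * \<eta> + Q * (1/4 + 2 * \<eta>)"
    using i iv Q0 by (intro add_mono mult_left_mono) auto
  also have "\<dots> = (1/4 + 3 * \<eta>) * Q" by (simp add: algebra_simps)
  finally have "(a * y + (Q * Ab / (1 - \<delta>)) * (1 - a)) * D \<le> (1/4 + 3 * \<eta>) * Q" .
  then have "a * y + (Q * Ab / (1 - \<delta>)) * (1 - a) \<le> (1/4 + 3 * \<eta>) * Q / D"
    using D0 by (simp add: le_divide_eq)
  then show ?thesis unfolding Q_def D_def by (simp add: mult.assoc)
qed

lemma prior_return:
  assumes "likelihood F h > 0"
  shows "U_prior \<delta> p (return_pmf F) h = U_env \<delta> p F h"
    and "V_prior \<delta> (return_pmf F) h = (SUP p\<in>decision_rules. U_env \<delta> p F h)"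
proof -
  have post: "posterior (return_pmf F) h F = 1" unfolding posterior_def using assms by simp
  show "U_prior \<delta> p (return_pmf F) h = U_env \<delta> p F h" unfolding U_prior_def using post by simp
  then show "V_prior \<delta> (return_pmf F) h = (SUP p\<in>decision_rules. U_env \<delta> p F h)"
    unfolding V_prior_def U_prior_def using post by simp
qed

lemma part_b_rule:
  assumes d0: "0 < \<delta>" and d1: "\<delta> < 1" and X: "X \<in> sets borel" and X0: "0 \<in> X" and x0: "x0 > 0"
    and unb: "\<not> bdd_above X" and p: "p \<in> decision_rules"
  shows "perf_ratio \<delta> X x0 (envs X) p \<le> 1/4"
proof (rule ennreal_le_epsilon)
  fix e :: real assume "1/4 < (top::ennreal)" and e0: "0 < e"
  define \<eta> where "\<eta> = e / 3"
  have \<eta>0: "0 < \<eta>" using e0 by (simp add: \<eta>_def)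
  define C where "C = {(h, P). h \<in> histories X x0 \<and> finite (set_pmf P) \<and> set_pmf P \<subseteq> X \<and>
      set (tl h) \<subseteq> set_pmf P \<and> (\<forall>s\<in>set_pmf P. s \<le> best_so_far h)}"
  define aval where "aval = (\<lambda>(h, P). fin_setting.uR \<delta> p P h / best_so_far h)"
  have Cbasic: "h \<noteq> [] \<and> x0 \<le> best_so_far h" if "(h, P) \<in> C" for h P
    using that bsf_ge_hd by (auto simp: C_def histories_def)
  have av01: "0 \<le> aval (h, P) \<and> aval (h, P) \<le> 1 \<and> fin_setting.uR \<delta> p P h \<le> aval (h, P) * best_so_far h"
    if hP: "(h, P) \<in> C" for h P
  proof -
    have fin: "finite (set_pmf P)" using hP by (auto simp: C_def)
    interpret G: fin_setting \<delta> p P using d0 d1 p fin by unfold_locales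
    have hb: "h \<noteq> []" "x0 \<le> best_so_far h" using Cbasic[OF hP] by auto
    have "G.uR h \<le> best_so_far h" using G.uR_le[of h "best_so_far h"] hP hb x0 by (auto simp: C_def)
    then show ?thesis using G.uR_nonneg[of h] hb x0 by (auto simp: aval_def divide_le_eq)
  qed
  have c0: "([x0], return_pmf 0) \<in> C" using X0 x0 by (auto simp: C_def histories_def bsf_single)
  have bdd: "bdd_above (aval ` C)" using av01 by (intro bdd_aboveI[of _ 1]) auto
  have Cne: "aval ` C \<noteq> {}" using c0 by auto
  define Ab where "Ab = Sup (aval ` C)"
  have Ab0: "0 \<le> Ab" using av01[OF c0] cSup_upper[OF imageI[OF c0] bdd] unfolding Ab_def by linarith
  have Ab1: "Ab \<le> 1" unfolding Ab_def using Cne av01 by (intro cSup_least) auto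
  have upper: "aval c \<le> Ab" if "c \<in> C" for c unfolding Ab_def using that bdd by (intro cSup_upper) auto
  obtain hP where hP: "hP \<in> C" and close: "Ab - \<eta> < aval hP"
    using less_cSupD[OF Cne, of "Ab - \<eta>"] \<eta>0 unfolding Ab_def by auto
  obtain h P where hPeq: "hP = (h, P)" by (cases hP)
  have hC: "(h, P) \<in> C" using hP hPeq by simp
  have fin: "finite (set_pmf P)" and Psub: "set_pmf P \<subseteq> X" and tlh: "set (tl h) \<subseteq> set_pmf P"
    and hhist: "h \<in> histories X x0" and sy0: "\<forall>s\<in>set_pmf P. s \<le> best_so_far h"
    using hC by (auto simp: C_def)
  interpret G: fin_setting \<delta> p P using d0 d1 p fin by unfold_locales
  define y where "y = best_so_far h"
  have hne: "h \<noteq> []" and y0: "0 < y" using Cbasic[OF hC] x0 by (auto simp: y_def)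
  have sy: "\<forall>s\<in>set_pmf P. s \<le> y" using sy0 by (simp add: y_def)
  define u where "u = G.uR h"
  define a where "a = u / y"
  have a01: "0 \<le> a" "a \<le> 1" using av01[OF hC] by (auto simp: a_def u_def aval_def y_def)
  have aAb: "a \<le> Ab" "Ab - \<eta> \<le> a" using upper[OF hC] close hPeq by (auto simp: a_def u_def aval_def y_def)
  define \<epsilon> where "\<epsilon> = min (1/2) (\<eta> * (1 - \<delta>) / \<delta>)"
  have e_pos: "0 < \<epsilon>" "\<epsilon> < 1" using \<eta>0 d0 d1 by (auto simp: \<epsilon>_def)
  have e_eta: "\<delta> * \<epsilon> \<le> \<eta> * (1 - \<delta>)"
  proof -
    have "\<delta> * \<epsilon> \<le> \<delta> * (\<eta> * (1 - \<delta>) / \<delta>)" using d0 by (intro mult_left_mono) (auto simp: \<epsilon>_def)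
    then show ?thesis using d0 by simp
  qed
  have "\<not> (\<forall>x\<in>X. x \<le> max y (y / (\<delta> * \<epsilon> * \<eta>)))" using unb unfolding bdd_above_def by blast
  then obtain L where LX: "L \<in> X" and Lbig: "max y (y / (\<delta> * \<epsilon> * \<eta>)) < L" by (auto simp: not_le)
  have yL: "y < L" using Lbig by simp
  have L0: "0 < L" using yL y0 by simp
  have Lbig2: "y \<le> \<delta> * \<epsilon> * L * \<eta>"
  proof -
    have "y / (\<delta> * \<epsilon> * \<eta>) < L" using Lbig by simp
    then have "y < L * (\<delta> * \<epsilon> * \<eta>)" using d0 e_pos \<eta>0 by (simp add: pos_divide_less_eq)
    then show ?thesis by (simp add: mult_ac)
  qed
  have sL: "\<forall>s\<in>set_pmf P. s < L" using sy yL by force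
  have Lnot: "L \<notin> set_pmf P" using sL by force
  define PFL where "PFL = PF \<epsilon> L P"
  have PFLset: "set_pmf PFL = insert L (set_pmf P)" and PFLfin: "finite (set_pmf PFL)"
    using PF_props(2,3)[OF e_pos Lnot fin] by (simp_all add: PFL_def)
  define F where "F = envP PFL"
  have Fenv: "F \<in> envs X" unfolding F_def using PFLfin PFLset Psub LX X by (intro envP_envs) auto
  have lik: "likelihood F h > 0" unfolding F_def using tlh PFLset by (intro lik_pos) auto
  have mu: "return_pmf F \<in> priors (consistent_envs (envs X) h)"
    using Fenv lik by (simp add: priors_def consistent_envs_def)
  have step3: "U_env \<delta> p F h / (SUP p\<in>decision_rules. U_env \<delta> p F h) \<le> 1/4 + ennreal e"
  proof -
    interpret FF: fin_setting \<delta> p PFL using d0 d1 p PFLfin by unfold_locales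
    define K where "K = \<delta> * \<epsilon> * L * Ab / (1 - \<delta>)"
    define R where "R = (\<lambda>h'. h' \<in> histories X x0 \<and> set (tl h') \<subseteq> set_pmf P)"
    have Rpres: "R (h' @ [s])" if "R h'" "s \<in> set_pmf P" for h' s
      using that Psub by (auto simp: R_def histories_def)
    have hyp: "U_env \<delta> p (envP (PF \<epsilon> L P)) (h' @ [L]) \<le> ennreal (L * Ab)"
      if R: "R h'" and "h' \<noteq> []" and hby: "best_so_far h' = y" for h'
    proof -
      have bL: "best_so_far (h' @ [L]) = L" using that yL by (simp add: bsf_snoc)
      have inC: "(h' @ [L], PFL) \<in> C"
        using R PFLfin PFLset Psub LX sy yL bL unfolding C_def R_def
        by (auto simp: histories_def)
      have "FF.uR (h' @ [L]) \<le> aval (h' @ [L], PFL) * L" using av01[OF inC] bL by simp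
      also have "\<dots> \<le> Ab * L" using upper[OF inC] L0 by (intro mult_right_mono) auto
      finally have "FF.uR (h' @ [L]) \<le> L * Ab" by (simp add: mult.commute)
      moreover have "U_env \<delta> p (envP PFL) (h' @ [L]) = ennreal (FF.uR (h' @ [L]))"
        using bL L0 by (intro FF.U_eq) auto
      ultimately show ?thesis unfolding PFL_def by (simp add: ennreal_leI)
    qed
    have Rh: "R h" using hhist tlh by (simp add: R_def)
    have cl: "y * FF.sR N h + K * u \<le> y * u + K * y" for N
    proof -
      have "y * fin_setting.sR \<delta> p (PF \<epsilon> L P) N h + (\<delta> * \<epsilon> * L * Ab / (1 - \<delta>)) * fin_setting.uR \<delta> p P h
          \<le> y * fin_setting.uR \<delta> p P h + (\<delta> * \<epsilon> * L * Ab / (1 - \<delta>)) * y"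
        by (rule claim[where R=R, OF d0 d1 p fin e_pos sy yL y0 Ab0 Rpres hyp Rh hne]) (use y_def in auto)
      then show ?thesis unfolding K_def u_def PFL_def .
    qed
    have Ub: "U_env \<delta> p F h \<le> ennreal (a * y + K * (1 - a))"
      unfolding F_def
    proof (rule FF.U_le_of_sR[OF hne])
      show "0 \<le> best_so_far h" using y0 y_def by simp
      fix N
      have "y * FF.sR N h \<le> y * (a * y + K * (1 - a))"
        using cl[of N] y0 by (simp add: a_def algebra_simps)
      then show "FF.sR N h \<le> a * y + K * (1 - a)" using y0 by simp
    qed
    define V0 where "V0 = \<delta> * \<epsilon> * L / (1 - \<delta> + \<delta> * \<epsilon>)"
    have V0pos: "0 < V0" unfolding V0_def using d0 d1 e_pos L0
      by (intro divide_pos_pos mult_pos_pos) (auto, smt (verit) mult_pos_pos)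
    define V where "V = (SUP p\<in>decision_rules. U_env \<delta> p F h)"
    have "ennreal V0 \<le> U_env \<delta> (\<lambda>h. if L \<le> best_so_far h then 1 else 0) F h"
      unfolding V0_def F_def PFL_def using V_lower[OF d0 d1 fin e_pos sL hne] y0 yL y_def by simp
    also have "\<dots> \<le> V" unfolding V_def by (rule SUP_upper) (auto simp: decision_rules_def)
    finally have V0V: "ennreal V0 \<le> V" .
    have Vpos: "0 < V" using V0V V0pos by (metis ennreal_less_zero_iff order_less_le_trans)
    have real: "a * y + K * (1 - a) \<le> (1/4 + e) * V0"
      using final_ineq[OF d0 d1 e_pos e_eta \<eta>0 y0 Lbig2 Ab0 Ab1 a01 aAb]
      unfolding K_def V0_def \<eta>_def by simp
    have "U_env \<delta> p F h \<le> ennreal ((1/4 + e) * V0)"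
      using Ub real by (meson ennreal_leI order_trans)
    also have "\<dots> = (1/4 + ennreal e) * ennreal V0"
      using e0 V0pos by (simp add: ennreal_mult ennreal_plus quarter)
    also have "\<dots> \<le> (1/4 + ennreal e) * V" using V0V by (rule mult_left_mono) simp
    finally have "U_env \<delta> p F h \<le> V * (1/4 + ennreal e)" by (simp add: mult.commute)
    then show ?thesis unfolding V_def[symmetric] by (rule divide_le_posI_ennreal[OF Vpos])
  qed
  have "perf_ratio \<delta> X x0 (envs X) p \<le> U_prior \<delta> p (return_pmf F) h / V_prior \<delta> (return_pmf F) h"
    unfolding perf_ratio_def by (rule INF_lower2[OF hhist], rule INF_lower[OF mu])
  also have "\<dots> = U_env \<delta> p F h / (SUP p\<in>decision_rules. U_env \<delta> p F h)"
    using prior_return[OF lik] by simp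
  also note step3
  finally show "perf_ratio \<delta> X x0 (envs X) p \<le> 1/4 + ennreal e" .
qed

theorem theorem2:
  fixes \<delta> x0 :: real and X :: "real set"
  assumes "0 < \<delta>" "\<delta> < 1" "X \<in> sets borel" "X \<subseteq> {0..}" "0 \<in> X" "x0 > 0"
  shows "perf_ratio \<delta> X x0 (envs X) (\<lambda>_. (1 - \<delta>) / (2 - \<delta>)) \<ge> 1/4
         \<and> (\<not> bdd_above X \<longrightarrow> dyn_robust \<delta> X x0 (envs X) (\<lambda>_. (1 - \<delta>) / (2 - \<delta>)))"
proof
  have A: "1/4 \<le> perf_ratio \<delta> X x0 (envs X) (\<lambda>_. (1 - \<delta>) / (2 - \<delta>))"
    using part_a[OF assms(1,2,6)] .
  then show "perf_ratio \<delta> X x0 (envs X) (\<lambda>_. (1 - \<delta>) / (2 - \<delta>)) \<ge> 1/4" by simp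
  show "\<not> bdd_above X \<longrightarrow> dyn_robust \<delta> X x0 (envs X) (\<lambda>_. (1 - \<delta>) / (2 - \<delta>))"
  proof
    assume unb: "\<not> bdd_above X"
    have pbar: "(\<lambda>_. (1 - \<delta>) / (2 - \<delta>)) \<in> decision_rules"
      unfolding decision_rules_def using assms(1,2) by auto
    have "opt_ratio \<delta> X x0 (envs X) \<le> 1/4"
      unfolding opt_ratio_def
      by (rule SUP_least) (rule part_b_rule[OF assms(1,2,3,5,6) unb])
    also note A
    finally have le: "opt_ratio \<delta> X x0 (envs X) \<le> perf_ratio \<delta> X x0 (envs X) (\<lambda>_. (1 - \<delta>) / (2 - \<delta>))" .
    have ge: "perf_ratio \<delta> X x0 (envs X) (\<lambda>_. (1 - \<delta>) / (2 - \<delta>)) \<le> opt_ratio \<delta> X x0 (envs X)"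
      unfolding opt_ratio_def using pbar by (rule SUP_upper)
    show "dyn_robust \<delta> X x0 (envs X) (\<lambda>_. (1 - \<delta>) / (2 - \<delta>))"
      unfolding dyn_robust_def using le ge by (rule antisym[rotated])
  qed
qed

end
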